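(* There is a universal constant $C>0$ such that for all sufficiently small $\varepsilon>0$ the following holds. Let $P$ be an irreducible, aperiodic transition matrix on a finite set $G$, reversible with respect to the probability measure $\pi$. If $A\subset S\subset G$ satisfy $\pi(A)\le\varepsilon\pi(S)$, then $$h_S(A)=\sum_{x\in A}h_S(x)\le C\,\frac{\varepsilon\log(1/\varepsilon)}{1-\lambda}.$$ In particular this applies to simple random walk on a finite regular graph whenever $|A|\le\varepsilon|S|$.
   Context: $(X_t)$ is the chain with transition matrix $P$. $\lambda=\max_{j>1}|\lambda_j|$, where $1=\lambda_1>\lambda_2\ge\dots\ge\lambda_n>-1$ are the eigenvalues of $P$. For $S\subset G$, $T_S=\inf\{t\ge0:X_t\in S\}$. The harmonic measure on $S$ from $y$ is $h_{y,S}(x)=\Pr_y[X_{T_S}=x]$ and $h_S(x)=\sum_y\pi(y)h_{y,S}(x)$ is the harmonic measure from stationarity. *)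

theory Defs
  imports Complex_Main "Jordan_Normal_Form.Char_Poly"
begin

(* State space G = {..<n}; a transition matrix is P :: nat => nat => real,
   P i j = probability of moving from i to j (only entries with i,j < n matter). *)

definition stochastic :: "nat \<Rightarrow> (nat \<Rightarrow> nat \<Rightarrow> real) \<Rightarrow> bool" where
  "stochastic n P \<longleftrightarrow> (\<forall>i<n. \<forall>j<n. 0 \<le> P i j) \<and> (\<forall>i<n. (\<Sum>j<n. P i j) = 1)"

fun nstep :: "nat \<Rightarrow> (nat \<Rightarrow> nat \<Rightarrow> real) \<Rightarrow> nat \<Rightarrow> nat \<Rightarrow> nat \<Rightarrow> real" where
  "nstep n P 0 i j = (if i = j then 1 else 0)"
| "nstep n P (Suc k) i j = (\<Sum>l<n. P i l * nstep n P k l j)"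

definition irreducible_chain :: "nat \<Rightarrow> (nat \<Rightarrow> nat \<Rightarrow> real) \<Rightarrow> bool" where
  "irreducible_chain n P \<longleftrightarrow> (\<forall>i<n. \<forall>j<n. \<exists>k. nstep n P k i j > 0)"

definition aperiodic_chain :: "nat \<Rightarrow> (nat \<Rightarrow> nat \<Rightarrow> real) \<Rightarrow> bool" where
  "aperiodic_chain n P \<longleftrightarrow> (\<forall>i<n. Gcd {k. 1 \<le> k \<and> nstep n P k i i > 0} = 1)"

definition prob_measure_on :: "nat \<Rightarrow> (nat \<Rightarrow> real) \<Rightarrow> bool" where
  "prob_measure_on n \<pi> \<longleftrightarrow> (\<forall>i<n. 0 \<le> \<pi> i) \<and> (\<Sum>i<n. \<pi> i) = 1"

definition reversible_wrt :: "nat \<Rightarrow> (nat \<Rightarrow> nat \<Rightarrow> real) \<Rightarrow> (nat \<Rightarrow> real) \<Rightarrow> bool" where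
  "reversible_wrt n P \<pi> \<longleftrightarrow> prob_measure_on n \<pi> \<and>
     (\<forall>i<n. \<forall>j<n. \<pi> i * P i j = \<pi> j * P j i)"

(* hit_at n P S k y x = Pr_y[T_S = k and X_k = x]  (T_S = inf{t>=0. X_t in S}) *)
fun hit_at :: "nat \<Rightarrow> (nat \<Rightarrow> nat \<Rightarrow> real) \<Rightarrow> nat set \<Rightarrow> nat \<Rightarrow> nat \<Rightarrow> nat \<Rightarrow> real" where
  "hit_at n P S 0 y x = (if y \<in> S \<and> y = x then 1 else 0)"
| "hit_at n P S (Suc k) y x =
     (if y \<in> S then 0 else (\<Sum>z<n. P y z * hit_at n P S k z x))"

(* harmonic measure on S from y: h_{y,S}(x) = Pr_y[X_{T_S} = x] *)
definition harm_from :: "nat \<Rightarrow> (nat \<Rightarrow> nat \<Rightarrow> real) \<Rightarrow> nat set \<Rightarrow> nat \<Rightarrow> nat \<Rightarrow> real" where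
  "harm_from n P S y x = (\<Sum>k. hit_at n P S k y x)"

definition harm :: "nat \<Rightarrow> (nat \<Rightarrow> nat \<Rightarrow> real) \<Rightarrow> (nat \<Rightarrow> real) \<Rightarrow> nat set \<Rightarrow> nat \<Rightarrow> real" where
  "harm n P \<pi> S x = (\<Sum>y<n. \<pi> y * harm_from n P S y x)"

definition eigenvalues_mset :: "nat \<Rightarrow> (nat \<Rightarrow> nat \<Rightarrow> real) \<Rightarrow> complex multiset" where
  "eigenvalues_mset n P = proots (char_poly (mat n n (\<lambda>(i,j). complex_of_real (P i j))))"

(* lambda = max_{j>1} |lambda_j|: remove one copy of lambda_1 = 1, take the maximal modulus
   of the rest (0 if there are no other eigenvalues) *)
definition slem :: "nat \<Rightarrow> (nat \<Rightarrow> nat \<Rightarrow> real) \<Rightarrow> real" where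
  "slem n P = Max (insert 0 (cmod ` set_mset (eigenvalues_mset n P - {#1#})))"

end

theory Submission
  imports Defs "Jordan_Normal_Form.Jordan_Normal_Form_Existence" "Jordan_Normal_Form.Spectral_Radius"
begin

locale rchain =
  fixes n :: nat and P :: "nat \<Rightarrow> nat \<Rightarrow> real" and pi :: "nat \<Rightarrow> real"
  assumes stoch: "stochastic n P" and irr: "irreducible_chain n P"
    and aper: "aperiodic_chain n P" and rev: "reversible_wrt n P pi"
begin

lemma P_nonneg: "i<n \<Longrightarrow> j<n \<Longrightarrow> 0 \<le> P i j"
  using stoch unfolding stochastic_def by auto
lemma P_row: "i<n \<Longrightarrow> (\<Sum>j<n. P i j) = 1"
  using stoch unfolding stochastic_def by auto
lemma pi_nonneg: "i<n \<Longrightarrow> 0 \<le> pi i"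
  using rev unfolding reversible_wrt_def prob_measure_on_def by auto
lemma pi_sum: "(\<Sum>i<n. pi i) = 1"
  using rev unfolding reversible_wrt_def prob_measure_on_def by auto
lemma detbal: "i<n \<Longrightarrow> j<n \<Longrightarrow> pi i * P i j = pi j * P j i"
  using rev unfolding reversible_wrt_def by auto

lemma n_pos: "0 < n"
  using pi_sum by (cases n) auto

lemma stat: assumes "j<n" shows "(\<Sum>i<n. pi i * P i j) = pi j"
proof -
  have "(\<Sum>i<n. pi i * P i j) = (\<Sum>i<n. pi j * P j i)"
    using detbal assms by (intro sum.cong) auto
  also have "\<dots> = pi j" using P_row[OF assms] by (simp add: sum_distrib_left[symmetric])
  finally show ?thesis .
qed

lemma nstep_nonneg: "i<n \<Longrightarrow> 0 \<le> nstep n P k i j"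
proof (induction k arbitrary: i)
  case 0 then show ?case by simp
next
  case (Suc k) then show ?case
    by (simp, intro sum_nonneg mult_nonneg_nonneg P_nonneg) auto
qed

lemma nstep_step: assumes "nstep n P (Suc k) i j > 0" "i<n"
  shows "\<exists>l<n. P i l > 0 \<and> nstep n P k l j > 0"
proof (rule ccontr)
  assume nt: "\<not> ?thesis"
  then have "\<forall>l<n. P i l * nstep n P k l j \<le> 0"
  proof (intro allI impI)
    fix l assume l: "l<n"
    have a: "0 \<le> P i l" using P_nonneg[OF assms(2) l] .
    have b: "0 \<le> nstep n P k l j" using nstep_nonneg[OF l] .
    from nt l have "\<not> (P i l > 0 \<and> nstep n P k l j > 0)" by blast
    then have "P i l = 0 \<or> nstep n P k l j = 0" using a b by linarith
    then show "P i l * nstep n P k l j \<le> 0" by auto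
  qed
  then have "(\<Sum>l<n. P i l * nstep n P k l j) \<le> 0" by (intro sum_nonpos) auto
  with assms(1) show False by simp
qed

lemma pi_pos: assumes "i<n" shows "pi i > 0"
proof (rule ccontr)
  assume "\<not> pi i > 0"
  with pi_nonneg[OF assms] have z: "pi i = 0" by auto
  have key: "\<And>j. j<n \<Longrightarrow> nstep n P k j i > 0 \<Longrightarrow> pi j = 0" for k
  proof (induction k)
    case 0 then show ?case using z by (simp split: if_splits)
  next
    case (Suc k j)
    then obtain l where l: "l<n" "P j l > 0" "nstep n P k l i > 0"
      using nstep_step by blast
    then have "pi l = 0" using Suc by auto
    then have "pi j * P j l = 0" using detbal[OF Suc(2) l(1)] by simp
    then show ?case using l by simp
  qed
  have "\<forall>j<n. pi j = 0"
  proof (intro allI impI)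
    fix j assume "j<n"
    with irr assms obtain k where "nstep n P k j i > 0" unfolding irreducible_chain_def by blast
    with key \<open>j<n\<close> show "pi j = 0" by blast
  qed
  then have "(\<Sum>j<n. pi j) = 0" by simp
  with pi_sum show False by simp
qed

definition Pf :: "(nat \<Rightarrow> real) \<Rightarrow> nat \<Rightarrow> real" where
  "Pf g = (\<lambda>i. \<Sum>j<n. P i j * g j)"

definition ip :: "(nat \<Rightarrow> real) \<Rightarrow> (nat \<Rightarrow> real) \<Rightarrow> real" where
  "ip f g = (\<Sum>i<n. pi i * f i * g i)"

lemma ip_sym: "ip f g = ip g f"
  unfolding ip_def by (simp add: mult_ac)

lemma ip_P_sym: "ip f (Pf g) = ip (Pf f) g"
proof -
  have "ip f (Pf g) = (\<Sum>i<n. \<Sum>j<n. pi i * P i j * f i * g j)"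
    unfolding ip_def Pf_def by (simp add: sum_distrib_left mult_ac)
  also have "\<dots> = (\<Sum>j<n. \<Sum>i<n. pi i * P i j * f i * g j)" by (rule sum.swap)
  also have "\<dots> = (\<Sum>j<n. \<Sum>i<n. pi j * P j i * f i * g j)"
    using detbal by (intro sum.cong refl) auto
  also have "\<dots> = ip (Pf f) g"
    unfolding ip_def Pf_def by (simp add: sum_distrib_left sum_distrib_right mult_ac)
  finally show ?thesis .
qed

lemma dir_a: "(\<Sum>i<n. \<Sum>j<n. pi i * P i j * (g i)^2) = ip g g"
  unfolding ip_def using P_row
  by (simp add: sum_distrib_left[symmetric] sum_distrib_right[symmetric] power2_eq_square mult_ac)

lemma dir_b: "(\<Sum>i<n. \<Sum>j<n. pi i * P i j * (g j)^2) = ip g g"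
proof -
  have "(\<Sum>i<n. \<Sum>j<n. pi i * P i j * (g j)^2) = (\<Sum>j<n. \<Sum>i<n. pi i * P i j * (g j)^2)"
    by (rule sum.swap)
  also have "\<dots> = (\<Sum>j<n. pi j * (g j)^2)"
    using stat by (simp add: sum_distrib_right[symmetric])
  finally show ?thesis unfolding ip_def by (simp add: power2_eq_square mult_ac)
qed

lemma dir_c: "(\<Sum>i<n. \<Sum>j<n. pi i * P i j * (g i * g j)) = ip g (Pf g)"
  unfolding ip_def Pf_def by (simp add: sum_distrib_left mult_ac)

lemma dirichlet_minus:
  "(\<Sum>i<n. \<Sum>j<n. pi i * P i j * (g i - g j)^2) = 2 * ip g g - 2 * ip g (Pf g)"
proof -
  have "(\<Sum>i<n. \<Sum>j<n. pi i * P i j * (g i - g j)^2) =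
     (\<Sum>i<n. \<Sum>j<n. pi i * P i j * (g i)^2) + (\<Sum>i<n. \<Sum>j<n. pi i * P i j * (g j)^2)
     - 2 * (\<Sum>i<n. \<Sum>j<n. pi i * P i j * (g i * g j))"
    by (simp add: power2_diff sum_subtractf sum.distrib sum_distrib_left algebra_simps)
  then show ?thesis using dir_a dir_b dir_c by simp
qed

lemma dirichlet_plus:
  "(\<Sum>i<n. \<Sum>j<n. pi i * P i j * (g i + g j)^2) = 2 * ip g g + 2 * ip g (Pf g)"
proof -
  have "(\<Sum>i<n. \<Sum>j<n. pi i * P i j * (g i + g j)^2) =
     (\<Sum>i<n. \<Sum>j<n. pi i * P i j * (g i)^2) + (\<Sum>i<n. \<Sum>j<n. pi i * P i j * (g j)^2)
     + 2 * (\<Sum>i<n. \<Sum>j<n. pi i * P i j * (g i * g j))"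
    by (simp add: power2_sum sum.distrib sum_distrib_left algebra_simps)
  then show ?thesis using dir_a dir_b dir_c by simp
qed

lemma ip_Pf_cong: assumes "\<forall>i<n. Pf g i = h i" shows "ip g (Pf g) = ip g h"
  unfolding ip_def using assms by (intro sum.cong) auto

lemma dbl_sum_zero:
  fixes F :: "nat \<Rightarrow> nat \<Rightarrow> real"
  assumes "\<And>i j. i<n \<Longrightarrow> j<n \<Longrightarrow> 0 \<le> F i j" "(\<Sum>i<n. \<Sum>j<n. F i j) = 0"
    "i<n" "j<n" shows "F i j = 0"
proof -
  have "\<forall>i\<in>{..<n}. (\<Sum>j<n. F i j) = 0"
    using assms(2) by (subst sum_nonneg_eq_0_iff[symmetric]) (auto intro!: sum_nonneg assms(1))
  then have "(\<Sum>j<n. F i j) = 0" using assms(3) by auto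
  then show ?thesis using assms(1,3,4) by (subst (asm) sum_nonneg_eq_0_iff) auto
qed

lemma eig_abs_le1: assumes E: "\<forall>i<n. Pf g i = r * g i" and k: "k<n" "g k \<noteq> 0"
  shows "\<bar>r\<bar> \<le> 1"
proof -
  define M where "M = Max ((\<lambda>i. \<bar>g i\<bar>) ` {..<n})"
  have fin: "finite ((\<lambda>i. \<bar>g i\<bar>) ` {..<n})" by simp
  have ne: "(\<lambda>i. \<bar>g i\<bar>) ` {..<n} \<noteq> {}" using k by auto
  obtain m where m: "m<n" "\<bar>g m\<bar> = M" using Max_in[OF fin ne] unfolding M_def by auto
  have le: "\<And>i. i<n \<Longrightarrow> \<bar>g i\<bar> \<le> M" unfolding M_def by (rule Max_ge[OF fin]) auto
  have Mpos: "M > 0" using le[OF k(1)] k(2) by auto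
  have "\<bar>r\<bar> * M = \<bar>Pf g m\<bar>" using E m by (simp add: abs_mult)
  also have "\<dots> \<le> (\<Sum>j<n. \<bar>P m j * g j\<bar>)" unfolding Pf_def by (rule sum_abs)
  also have "\<dots> \<le> (\<Sum>j<n. P m j * M)"
    using P_nonneg[OF m(1)] le by (intro sum_mono) (auto simp: abs_mult intro!: mult_left_mono)
  also have "\<dots> = M" using P_row[OF m(1)] by (simp add: sum_distrib_right[symmetric])
  finally show ?thesis using Mpos by simp
qed

lemma edge_path:
  fixes g :: "nat \<Rightarrow> real" and c :: real
  assumes edge: "\<And>a b. a<n \<Longrightarrow> b<n \<Longrightarrow> P a b > 0 \<Longrightarrow> g b = c * g a"
  shows "i<n \<Longrightarrow> nstep n P k i j > 0 \<Longrightarrow> g j = c^k * g i"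
proof (induction k arbitrary: i)
  case 0 then show ?case by (simp split: if_splits)
next
  case (Suc k i)
  then obtain l where l: "l<n" "P i l > 0" "nstep n P k l j > 0" using nstep_step by blast
  then have "g j = c^k * g l" using Suc by auto
  also have "g l = c * g i" using edge[OF Suc(2) l(1,2)] .
  finally show ?case by (simp add: mult_ac)
qed

lemma eig_one_const: assumes E: "\<forall>i<n. Pf g i = g i" and ij: "i<n" "j<n"
  shows "g i = g j"
proof -
  have "ip g (Pf g) = ip g g" using ip_Pf_cong[OF E] .
  then have z: "(\<Sum>i<n. \<Sum>j<n. pi i * P i j * (g i - g j)^2) = 0"
    using dirichlet_minus[of g] by simp
  have edge: "g b = 1 * g a" if "a<n" "b<n" "P a b > 0" for a b
  proof -
    have "pi a * P a b * (g a - g b)^2 = 0"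
      using dbl_sum_zero[OF _ z that(1,2)] pi_nonneg P_nonneg by auto
    then show ?thesis using pi_pos[OF that(1)] that(3) by simp
  qed
  obtain k where "nstep n P k i j > 0" using irr ij unfolding irreducible_chain_def by blast
  from edge_path[of g 1, OF edge ij(1) this] show ?thesis by simp
qed

lemma eig_minus_one_zero: assumes E: "\<forall>i<n. Pf g i = - g i" and i: "i<n"
  shows "g i = 0"
proof (rule ccontr)
  assume gi: "g i \<noteq> 0"
  have "ip g (Pf g) = ip g (\<lambda>i. - g i)" using ip_Pf_cong[OF E] .
  then have "ip g (Pf g) = - ip g g" unfolding ip_def by (simp add: sum_negf)
  then have z: "(\<Sum>i<n. \<Sum>j<n. pi i * P i j * (g i + g j)^2) = 0"
    using dirichlet_plus[of g] by simp
  have edge: "g b = (-1) * g a" if "a<n" "b<n" "P a b > 0" for a b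
  proof -
    have "pi a * P a b * (g a + g b)^2 = 0"
      using dbl_sum_zero[OF _ z that(1,2)] pi_nonneg P_nonneg by auto
    then show ?thesis using pi_pos[OF that(1)] that(3) by simp
  qed
  define K where "K = {k. 1 \<le> k \<and> nstep n P k i i > 0}"
  have "\<forall>k\<in>K. 2 dvd k"
  proof
    fix k assume "k \<in> K"
    then have "nstep n P k i i > 0" unfolding K_def by auto
    from edge_path[of g "-1", OF edge i this] have "g i = (-1)^k * g i" .
    with gi have "(-1::real)^k = 1" by simp
    then show "2 dvd k" by (metis neg_one_odd_power one_neq_neg_one)
  qed
  then have "2 dvd Gcd K" by (intro Gcd_greatest) auto
  moreover have "Gcd K = 1" using aper i unfolding aperiodic_chain_def K_def by auto
  ultimately show False by simp
qed

lemma complex_eig_real: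
  fixes f :: "nat \<Rightarrow> complex"
  assumes E: "\<forall>i<n. (\<Sum>j<n. complex_of_real (P i j) * f j) = z * f i"
    and k: "k<n" "f k \<noteq> 0"
  shows "Im z = 0"
proof -
  define H where "H = (\<Sum>i<n. \<Sum>j<n. complex_of_real (pi i * P i j) * (cnj (f i) * f j))"
  define N where "N = (\<Sum>i<n. pi i * (cmod (f i))^2)"
  have H1: "H = z * complex_of_real N"
  proof -
    have "H = (\<Sum>i<n. complex_of_real (pi i) * cnj (f i) * (\<Sum>j<n. complex_of_real (P i j) * f j))"
      unfolding H_def by (simp add: sum_distrib_left mult_ac)
    also have "\<dots> = (\<Sum>i<n. complex_of_real (pi i) * cnj (f i) * (z * f i))"
      using E by (intro sum.cong) auto
    also have "\<dots> = z * (\<Sum>i<n. complex_of_real (pi i) * (cnj (f i) * f i))"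
      by (simp add: sum_distrib_left mult_ac)
    also have "\<dots> = z * complex_of_real N"
      unfolding N_def by (simp add: complex_mult_cnj cmod_def power2_eq_square mult_ac)
    finally show ?thesis .
  qed
  have H2: "cnj H = H"
  proof -
    have "cnj H = (\<Sum>i<n. \<Sum>j<n. complex_of_real (pi i * P i j) * (f i * cnj (f j)))"
      unfolding H_def by (simp add: mult_ac)
    also have "\<dots> = (\<Sum>j<n. \<Sum>i<n. complex_of_real (pi i * P i j) * (f i * cnj (f j)))"
      by (rule sum.swap)
    also have "\<dots> = (\<Sum>j<n. \<Sum>i<n. complex_of_real (pi j * P j i) * (cnj (f j) * f i))"
      using detbal by (intro sum.cong refl) (auto simp: mult_ac)
    also have "\<dots> = H" unfolding H_def ..
    finally show ?thesis .
  qed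
  have Npos: "N > 0"
  proof -
    have "pi k * (cmod (f k))^2 > 0" using pi_pos[OF k(1)] k(2) by simp
    moreover have "pi k * (cmod (f k))^2 \<le> N" unfolding N_def
      by (rule member_le_sum) (use k pi_nonneg in auto)
    ultimately show ?thesis by linarith
  qed
  from H1 H2 have "cnj z * complex_of_real N = z * complex_of_real N" by simp
  then have "cnj z = z" using Npos by simp
  then show ?thesis by (metis Reals_cnj_iff complex_is_Real_iff)
qed

lemma complex_eig_parts:
  fixes f :: "nat \<Rightarrow> complex"
  assumes E: "\<forall>i<n. (\<Sum>j<n. complex_of_real (P i j) * f j) = z * f i" and z: "Im z = 0"
  shows "\<forall>i<n. Pf (\<lambda>j. Re (f j)) i = Re z * Re (f i)"
        "\<forall>i<n. Pf (\<lambda>j. Im (f j)) i = Re z * Im (f i)"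
proof -
  { fix i assume i: "i<n"
    have "Re (\<Sum>j<n. complex_of_real (P i j) * f j) = Pf (\<lambda>j. Re (f j)) i"
      unfolding Pf_def by (simp add: Re_sum)
    moreover have "Im (\<Sum>j<n. complex_of_real (P i j) * f j) = Pf (\<lambda>j. Im (f j)) i"
      unfolding Pf_def by (simp add: Im_sum)
    ultimately have "Pf (\<lambda>j. Re (f j)) i = Re z * Re (f i)" "Pf (\<lambda>j. Im (f j)) i = Re z * Im (f i)"
      using E i z by auto }
  then show "\<forall>i<n. Pf (\<lambda>j. Re (f j)) i = Re z * Re (f i)"
        "\<forall>i<n. Pf (\<lambda>j. Im (f j)) i = Re z * Im (f i)" by auto
qed

lemma complex_eig:
  fixes f :: "nat \<Rightarrow> complex"
  assumes E: "\<forall>i<n. (\<Sum>j<n. complex_of_real (P i j) * f j) = z * f i"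
    and k: "k<n" "f k \<noteq> 0"
  shows "Im z = 0" "\<bar>Re z\<bar> \<le> 1" "z \<noteq> -1"
proof -
  show z: "Im z = 0" by (rule complex_eig_real[OF E k])
  note parts = complex_eig_parts[OF E z]
  have "Re (f k) \<noteq> 0 \<or> Im (f k) \<noteq> 0" using k(2) complex_eq_iff by auto
  then show "\<bar>Re z\<bar> \<le> 1"
    using eig_abs_le1[OF parts(1) k(1)] eig_abs_le1[OF parts(2) k(1)] by auto
  show "z \<noteq> -1"
  proof
    assume "z = -1"
    then have "\<forall>i<n. Pf (\<lambda>j. Re (f j)) i = - Re (f i)" "\<forall>i<n. Pf (\<lambda>j. Im (f j)) i = - Im (f i)"
      using parts by auto
    from eig_minus_one_zero[OF this(1) k(1)] eig_minus_one_zero[OF this(2) k(1)]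
    have "f k = 0" by (simp add: complex_eq_iff)
    with k show False by simp
  qed
qed

lemma complex_eig_one:
  fixes f :: "nat \<Rightarrow> complex"
  assumes E: "\<forall>i<n. (\<Sum>j<n. complex_of_real (P i j) * f j) = f i"
    and S: "(\<Sum>i<n. complex_of_real (pi i) * f i) = 0" and k: "k<n"
  shows "f k = 0"
proof -
  have E': "\<forall>i<n. (\<Sum>j<n. complex_of_real (P i j) * f j) = 1 * f i" using E by simp
  note parts = complex_eig_parts[OF E', simplified]
  have cr: "Re (f i) = Re (f k)" "Im (f i) = Im (f k)" if "i<n" for i
    using eig_one_const[OF parts(1) that k] eig_one_const[OF parts(2) that k] by auto
  have "Re (\<Sum>i<n. complex_of_real (pi i) * f i) = (\<Sum>i<n. pi i * Re (f k))"
    by (simp add: Re_sum cr)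
  then have "Re (f k) = 0" using S pi_sum by (simp add: sum_distrib_right[symmetric])
  moreover have "Im (\<Sum>i<n. complex_of_real (pi i) * f i) = (\<Sum>i<n. pi i * Im (f k))"
    by (simp add: Im_sum cr)
  then have "Im (f k) = 0" using S pi_sum by (simp add: sum_distrib_right[symmetric])
  ultimately show ?thesis by (simp add: complex_eq_iff)
qed

end

definition Smat :: "nat \<Rightarrow> complex mat" where
  "Smat n = mat n n (\<lambda>(i,j). if j = 0 \<or> i = j then 1 else 0)"
definition Smat' :: "nat \<Rightarrow> complex mat" where
  "Smat' n = mat n n (\<lambda>(i,j). if j = 0 then (if i = 0 then 1 else -1) else if i = j then 1 else 0)"

lemma Smat_carrier[simp]: "Smat n \<in> carrier_mat n n" "Smat' n \<in> carrier_mat n n"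
  unfolding Smat_def Smat'_def by auto

lemma sum_two_deltas:
  fixes X :: "nat \<Rightarrow> complex"
  assumes "i < n" "0 < i"
  shows "(\<Sum>k\<in>{0..<n}. (if k = 0 \<or> i = k then 1 else 0) * X k) = X 0 + X i"
proof -
  have "(\<Sum>k\<in>{0..<n}. (if k = 0 \<or> i = k then 1 else 0) * X k)
      = (\<Sum>k\<in>{0..<n}. (if k = 0 then X k else 0) + (if k = i then X k else 0))"
    using assms by (intro sum.cong) auto
  also have "\<dots> = X 0 + X i" using assms by (simp add: sum.distrib)
  finally show ?thesis .
qed

lemma S_mult: assumes X: "X \<in> carrier_mat n nc" and i: "i<n" and j: "j<nc"
  shows "(Smat n * X) $$ (i,j) = (if i = 0 then X $$ (0,j) else X $$ (0,j) + X $$ (i,j))"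
proof -
  have "(Smat n * X) $$ (i,j) = (\<Sum>k\<in>{0..<n}. (if k = 0 \<or> i = k then 1 else 0) * X $$ (k,j))"
    using X i j by (simp add: Smat_def scalar_prod_def)
  also have "\<dots> = (if i = 0 then X $$ (0,j) else X $$ (0,j) + X $$ (i,j))"
  proof (cases "i = 0")
    case True
    then have "(\<Sum>k\<in>{0..<n}. (if k = 0 \<or> i = k then 1 else 0) * X $$ (k,j))
       = (\<Sum>k\<in>{0..<n}. if k = 0 then X $$ (k,j) else 0)" by (intro sum.cong) auto
    then show ?thesis using True i by simp
  next
    case False
    then show ?thesis using sum_two_deltas[of i n "\<lambda>k. X $$ (k,j)"] i
      by simp
  qed
  finally show ?thesis .
qed

lemma S'_mult: assumes X: "X \<in> carrier_mat n nc" and i: "i<n" and j: "j<nc"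
  shows "(Smat' n * X) $$ (i,j) = (if i = 0 then X $$ (0,j) else X $$ (i,j) - X $$ (0,j))"
proof -
  have "(Smat' n * X) $$ (i,j) = (\<Sum>k\<in>{0..<n}. (if k = 0 then (if i = 0 then 1 else -1) else if i = k then 1 else 0) * X $$ (k,j))"
    using X i j by (simp add: Smat'_def scalar_prod_def)
  also have "\<dots> = (if i = 0 then X $$ (0,j) else X $$ (i,j) - X $$ (0,j))"
  proof (cases "i = 0")
    case True
    then have "(\<Sum>k\<in>{0..<n}. (if k = 0 then (if i = 0 then 1 else -1) else if i = k then 1 else 0) * X $$ (k,j))
       = (\<Sum>k\<in>{0..<n}. if k = 0 then X $$ (k,j) else 0)" by (intro sum.cong) auto
    then show ?thesis using True i by simp
  next
    case False
    then have "(\<Sum>k\<in>{0..<n}. (if k = 0 then (if i = 0 then 1 else -1) else if i = k then 1 else 0) * X $$ (k,j))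
       = (\<Sum>k\<in>{0..<n}. (if k = 0 then - X $$ (k,j) else 0) + (if k = i then X $$ (k,j) else 0))"
      by (intro sum.cong) auto
    then show ?thesis using False i by (simp add: sum.distrib)
  qed
  finally show ?thesis .
qed

lemma mult_S: assumes X: "X \<in> carrier_mat nr n" and i: "i<nr" and j: "j<n"
  shows "(X * Smat n) $$ (i,j) = (if j = 0 then (\<Sum>l<n. X $$ (i,l)) else X $$ (i,j))"
proof -
  have "(X * Smat n) $$ (i,j) = (\<Sum>k\<in>{0..<n}. X $$ (i,k) * (if j = 0 \<or> k = j then 1 else 0))"
    using X i j by (simp add: Smat_def scalar_prod_def)
  also have "\<dots> = (if j = 0 then (\<Sum>l<n. X $$ (i,l)) else X $$ (i,j))"
  proof (cases "j = 0")
    case True then show ?thesis by (simp add: atLeast0LessThan)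
  next
    case False
    then have "(\<Sum>k\<in>{0..<n}. X $$ (i,k) * (if j = 0 \<or> k = j then 1 else 0)) =
       (\<Sum>k\<in>{0..<n}. if k = j then X $$ (i,k) else 0)" by (intro sum.cong) auto
    then show ?thesis using False j by simp
  qed
  finally show ?thesis .
qed

lemma Smat_dims[simp]: "dim_row (Smat n) = n" "dim_col (Smat n) = n" "dim_row (Smat' n) = n" "dim_col (Smat' n) = n"
  unfolding Smat_def Smat'_def by auto

lemma SS': "Smat n * Smat' n = 1\<^sub>m n"
proof (rule eq_matI)
  fix i j assume "i < dim_row (1\<^sub>m n)" "j < dim_col (1\<^sub>m n)"
  then have ij: "i<n" "j<n" by auto
  then show "(Smat n * Smat' n) $$ (i,j) = 1\<^sub>m n $$ (i,j)"
    unfolding S_mult[OF Smat_carrier(2) ij] by (auto simp: Smat'_def)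
qed auto

lemma S'S: "Smat' n * Smat n = 1\<^sub>m n"
proof (rule eq_matI)
  fix i j assume "i < dim_row (1\<^sub>m n)" "j < dim_col (1\<^sub>m n)"
  then have ij: "i<n" "j<n" by auto
  then show "(Smat' n * Smat n) $$ (i,j) = 1\<^sub>m n $$ (i,j)"
    unfolding S'_mult[OF Smat_carrier(1) ij] by (auto simp: Smat_def)
qed auto

lemma char_poly_1x1: "char_poly (mat 1 1 (\<lambda>_. c)) = [: -c, 1 :]"
  by (simp add: char_poly_defs det_def sign_def)

lemma cp_split:
  fixes M :: "complex mat"
  assumes M: "M \<in> carrier_mat n n" and n: "0 < n" and rs: "\<forall>k<n. (\<Sum>l<n. M$$(k,l)) = c"
  shows "char_poly M = [:-c,1:] * char_poly (mat (n-1) (n-1) (\<lambda>(i,j). M$$(Suc i, Suc j) - M$$(0, Suc j)))"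
proof -
  define B where "B = Smat' n * M * Smat n"
  define Q where "Q = mat (n-1) (n-1) (\<lambda>(i,j). M$$(Suc i, Suc j) - M$$(0, Suc j))"
  have MS: "M * Smat n \<in> carrier_mat n n" using M Smat_carrier(1) by (rule mult_carrier_mat)
  have Bc: "B \<in> carrier_mat n n" unfolding B_def
    using mult_carrier_mat[OF Smat_carrier(2) M] Smat_carrier(1) by (rule mult_carrier_mat)
  have Bent: "B $$ (i,j) = (if i = 0 then (if j = 0 then c else M $$ (0,j))
      else (if j = 0 then 0 else M $$ (i,j) - M $$ (0,j)))" if "i<n" "j<n" for i j
  proof -
    have Beq: "B = Smat' n * (M * Smat n)" unfolding B_def using M by (simp add: assoc_mult_mat[of _ n n _ n _ n])
    have e1: "(M * Smat n) $$ (i,j) = (if j = 0 then (\<Sum>l<n. M $$ (i,l)) else M $$ (i,j))"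
      by (rule mult_S[OF M that])
    have e0: "(M * Smat n) $$ (0,j) = (if j = 0 then (\<Sum>l<n. M $$ (0,l)) else M $$ (0,j))"
      by (rule mult_S[OF M n that(2)])
    have "B $$ (i,j) = (Smat' n * (M * Smat n)) $$ (i,j)" using Beq by simp
    also have "\<dots> = (if i = 0 then (M * Smat n) $$ (0,j) else (M * Smat n) $$ (i,j) - (M * Smat n) $$ (0,j))"
      by (rule S'_mult[OF MS that])
    finally show ?thesis unfolding e0 e1 using rs that n by auto
  qed
  have B4: "B = four_block_mat (mat 1 1 (\<lambda>_. c)) (mat 1 (n-1) (\<lambda>(_,j). B$$(0,Suc j))) (0\<^sub>m (n-1) 1) Q"
  proof (rule eq_matI)
    fix i j assume ij: "i < dim_row (four_block_mat (mat 1 1 (\<lambda>_. c)) (mat 1 (n-1) (\<lambda>(_,j). B$$(0,Suc j))) (0\<^sub>m (n-1) 1) Q)"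
       "j < dim_col (four_block_mat (mat 1 1 (\<lambda>_. c)) (mat 1 (n-1) (\<lambda>(_,j). B$$(0,Suc j))) (0\<^sub>m (n-1) 1) Q)"
    then have ij': "i < n" "j < n" using n by (auto simp: Q_def)
    show "B $$ (i,j) = four_block_mat (mat 1 1 (\<lambda>_. c)) (mat 1 (n-1) (\<lambda>(_,j). B$$(0,Suc j))) (0\<^sub>m (n-1) 1) Q $$ (i,j)"
      using ij' n Bent[OF ij'] Bent[of "0"] by (auto simp: Q_def)
  qed (use Bc n in \<open>auto simp: Q_def\<close>)
  have sim: "similar_mat M B"
    unfolding similar_mat_def
  proof (intro exI)
    show "similar_mat_wit M B (Smat n) (Smat' n)"
    proof (rule similar_mat_witI[OF SS' S'S _ M Bc])
      have Beq: "B = Smat' n * (M * Smat n)" unfolding B_def using M by (simp add: assoc_mult_mat[of _ n n _ n _ n])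
      have "Smat n * B = (Smat n * Smat' n) * (M * Smat n)"
        unfolding Beq using MS by (simp add: assoc_mult_mat[of _ n n _ n _ n])
      also have "\<dots> = M * Smat n" unfolding SS' using MS by (rule left_mult_one_mat)
      finally have "Smat n * B * Smat' n = M * Smat n * Smat' n" by simp
      also have "\<dots> = M * (Smat n * Smat' n)" using M by (simp add: assoc_mult_mat[of _ n n _ n _ n])
      also have "\<dots> = M" unfolding SS' using M by (rule right_mult_one_mat)
      finally show "M = Smat n * B * Smat' n" by simp
    qed auto
  qed
  have "char_poly M = char_poly B" by (rule char_poly_similar[OF sim])
  also have "\<dots> = char_poly (mat 1 1 (\<lambda>_. c)) * char_poly Q"
    by (subst B4, rule char_poly_four_block_zeros_col) (auto simp: Q_def)
  finally show ?thesis unfolding char_poly_1x1 Q_def .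
qed

lemma smult_mat_vec: assumes M: "M \<in> carrier_mat n n" and v: "v \<in> carrier_vec n"
  shows "(c \<cdot>\<^sub>m M) *\<^sub>v v = c \<cdot>\<^sub>v (M *\<^sub>v v)"
proof (rule eq_vecI)
  fix i assume "i < dim_vec (c \<cdot>\<^sub>v (M *\<^sub>v v))"
  then have i: "i < n" using M by auto
  have "((c \<cdot>\<^sub>m M) *\<^sub>v v) $ i = (\<Sum>j\<in>{0..<n}. c * M $$ (i,j) * v $ j)"
    using M v i by (simp add: scalar_prod_def)
  also have "\<dots> = c * (\<Sum>j\<in>{0..<n}. M $$ (i,j) * v $ j)"
    by (simp add: sum_distrib_left mult_ac)
  also have "\<dots> = (c \<cdot>\<^sub>v (M *\<^sub>v v)) $ i"
    using M v i by (simp add: scalar_prod_def)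
  finally show "((c \<cdot>\<^sub>m M) *\<^sub>v v) $ i = (c \<cdot>\<^sub>v (M *\<^sub>v v)) $ i" .
qed (use M in auto)

lemma smult_pow_entries: fixes M :: "complex mat" assumes M: "M \<in> carrier_mat n n"
  shows "i<n \<Longrightarrow> j<n \<Longrightarrow> ((c \<cdot>\<^sub>m M) ^\<^sub>m k) $$ (i,j) = c^k * (M ^\<^sub>m k) $$ (i,j)"
proof (induction k arbitrary: i j)
  case 0 then show ?case using M by simp
next
  case (Suc k i j)
  have c1: "(c \<cdot>\<^sub>m M) ^\<^sub>m k \<in> carrier_mat n n" using M by auto
  have c2: "M ^\<^sub>m k \<in> carrier_mat n n" using M by auto
  have "((c \<cdot>\<^sub>m M) ^\<^sub>m Suc k) $$ (i,j) = (\<Sum>l\<in>{0..<n}. ((c \<cdot>\<^sub>m M) ^\<^sub>m k) $$ (i,l) * (c * M $$ (l,j)))"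
    using Suc.prems M c1 by (simp add: scalar_prod_def)
  also have "\<dots> = (\<Sum>l\<in>{0..<n}. c^k * (M ^\<^sub>m k) $$ (i,l) * (c * M $$ (l,j)))"
    using Suc by (intro sum.cong) auto
  also have "\<dots> = c^(Suc k) * (\<Sum>l\<in>{0..<n}. (M ^\<^sub>m k) $$ (i,l) * M $$ (l,j))"
    unfolding sum_distrib_left by (intro sum.cong refl) (simp add: algebra_simps)
  also have "\<dots> = c^(Suc k) * (M ^\<^sub>m Suc k) $$ (i,j)"
    using Suc.prems M c2 by (simp add: scalar_prod_def)
  finally show ?case .
qed

context rchain
begin

definition Pc :: "complex mat" where "Pc = mat n n (\<lambda>(i,j). complex_of_real (P i j))"
definition Rc :: "complex mat" where "Rc = mat n n (\<lambda>(i,j). complex_of_real (P i j - pi j))"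
definition Qc :: "complex mat" where
  "Qc = mat (n-1) (n-1) (\<lambda>(i,j). complex_of_real (P (Suc i) (Suc j) - P 0 (Suc j)))"

lemma Pc_carrier: "Pc \<in> carrier_mat n n" and Rc_carrier: "Rc \<in> carrier_mat n n"
  and Qc_carrier: "Qc \<in> carrier_mat (n-1) (n-1)"
  unfolding Pc_def Rc_def Qc_def by auto

lemma cpP: "char_poly Pc = [:-1,1:] * char_poly Qc"
proof -
  have rs: "\<forall>k<n. (\<Sum>l<n. Pc$$(k,l)) = 1"
  proof (intro allI impI)
    fix k assume k: "k<n"
    have "(\<Sum>l<n. Pc$$(k,l)) = complex_of_real (\<Sum>l<n. P k l)" unfolding Pc_def using k by simp
    then show "(\<Sum>l<n. Pc$$(k,l)) = 1" using P_row[OF k] by simp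
  qed
  have "mat (n-1) (n-1) (\<lambda>(i,j). Pc$$(Suc i, Suc j) - Pc$$(0, Suc j)) = Qc"
    unfolding Qc_def Pc_def by (rule eq_matI) auto
  with cp_split[OF Pc_carrier n_pos rs] show ?thesis by simp
qed

lemma cpR: "char_poly Rc = [:0,1:] * char_poly Qc"
proof -
  have rs: "\<forall>k<n. (\<Sum>l<n. Rc$$(k,l)) = 0"
  proof (intro allI impI)
    fix k assume k: "k<n"
    have "(\<Sum>l<n. Rc$$(k,l)) = complex_of_real (\<Sum>l<n. P k l - pi l)" unfolding Rc_def using k by simp
    then show "(\<Sum>l<n. Rc$$(k,l)) = 0" using P_row[OF k] pi_sum by (simp add: sum_subtractf)
  qed
  have "mat (n-1) (n-1) (\<lambda>(i,j). Rc$$(Suc i, Suc j) - Rc$$(0, Suc j)) = Qc"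
    unfolding Qc_def Rc_def by (rule eq_matI) auto
  with cp_split[OF Rc_carrier n_pos rs] show ?thesis by simp
qed

lemma cpQ_nz: "char_poly Qc \<noteq> 0"
  using degree_monic_char_poly[OF Qc_carrier] by auto

lemma slem_eq: "slem n P = Max (insert 0 (cmod ` set_mset (proots (char_poly Qc))))"
proof -
  have "eigenvalues_mset n P = proots (char_poly Pc)" unfolding eigenvalues_mset_def Pc_def ..
  also have "\<dots> = {#1#} + proots (char_poly Qc)"
    unfolding cpP using cpQ_nz by (subst proots_mult) auto
  finally show ?thesis unfolding slem_def by simp
qed

lemma Rc_eig_vec:
  assumes v: "v \<in> carrier_vec n" "v \<noteq> 0\<^sub>v n" and E: "Rc *\<^sub>v v = z \<cdot>\<^sub>v v" and z: "z \<noteq> 0"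
  shows "cmod z < 1"
proof -
  define f where "f = (\<lambda>i. v $ i)"
  define s where "s = (\<Sum>j<n. complex_of_real (pi j) * f j)"
  have E1: "(\<Sum>j<n. complex_of_real (P i j) * f j) - s = z * f i" if i: "i<n" for i
  proof -
    have "(Rc *\<^sub>v v) $ i = (\<Sum>j\<in>{0..<n}. complex_of_real (P i j - pi j) * f j)"
      using i v unfolding Rc_def f_def by (simp add: scalar_prod_def)
    also have "\<dots> = (\<Sum>j<n. complex_of_real (P i j) * f j) - s"
      unfolding s_def by (simp add: atLeast0LessThan algebra_simps sum_subtractf)
    finally show ?thesis using E i v by (simp add: f_def)
  qed
  have "(\<Sum>i<n. complex_of_real (pi i) * ((\<Sum>j<n. complex_of_real (P i j) * f j) - s))
        = (\<Sum>i<n. complex_of_real (pi i) * (z * f i))"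
    using E1 by (intro sum.cong) auto
  moreover have "(\<Sum>i<n. complex_of_real (pi i) * ((\<Sum>j<n. complex_of_real (P i j) * f j) - s)) = 0"
  proof -
    have "(\<Sum>i<n. complex_of_real (pi i) * (\<Sum>j<n. complex_of_real (P i j) * f j))
        = (\<Sum>j<n. (\<Sum>i<n. complex_of_real (pi i * P i j)) * f j)"
      by (simp add: sum_distrib_left sum_distrib_right mult_ac) (rule sum.swap)
    also have "\<dots> = (\<Sum>j<n. complex_of_real (pi j) * f j)"
    proof (intro sum.cong refl)
      fix j assume "j \<in> {..<n}"
      then have j: "j<n" by simp
      have "(\<Sum>i<n. complex_of_real (pi i * P i j)) = complex_of_real (\<Sum>i<n. pi i * P i j)"
        by (rule of_real_sum[symmetric])
      then show "(\<Sum>i<n. complex_of_real (pi i * P i j)) * f j = complex_of_real (pi j) * f j"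
        using stat[OF j] by simp
    qed
    finally have a: "(\<Sum>i<n. complex_of_real (pi i) * (\<Sum>j<n. complex_of_real (P i j) * f j)) = s"
      unfolding s_def .
    have b: "(\<Sum>i<n. complex_of_real (pi i) * s) = s"
      using pi_sum by (simp flip: sum_distrib_right of_real_sum)
    show ?thesis using a b by (simp add: right_diff_distrib sum_subtractf)
  qed
  ultimately have "z * s = 0" unfolding s_def by (simp add: sum_distrib_left mult_ac)
  then have s0: "s = 0" using z by simp
  have E2: "\<forall>i<n. (\<Sum>j<n. complex_of_real (P i j) * f j) = z * f i" using E1 s0 by simp
  obtain k where k: "k<n" "f k \<noteq> 0"
    using v unfolding f_def by (metis eq_vecI index_zero_vec(1) index_zero_vec(2) carrier_vecD)
  note ce = complex_eig[OF E2 k]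
  have "z \<noteq> 1"
  proof
    assume "z = 1"
    then have "\<forall>i<n. (\<Sum>j<n. complex_of_real (P i j) * f j) = f i" using E2 by simp
    from complex_eig_one[OF this _ k(1)] s0 k show False unfolding s_def by simp
  qed
  have zr: "z = complex_of_real (Re z)" using ce(1) by (simp add: complex_eq_iff)
  have "Re z \<noteq> 1" "Re z \<noteq> -1" using \<open>z \<noteq> 1\<close> ce(3) zr by (metis of_real_1 of_real_minus)+
  then have "\<bar>Re z\<bar> < 1" using ce(2) by auto
  then show ?thesis by (subst zr) simp
qed

lemma Rc_eig_small: assumes "eigenvalue Rc z" "z \<noteq> 0" shows "cmod z < 1"
  using assms Rc_eig_vec Rc_carrier unfolding eigenvalue_def eigenvector_def by auto

lemma slem_nonneg: "0 \<le> slem n P"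
  unfolding slem_eq by (rule Max_ge) auto

lemma slem_lt1: "slem n P < 1"
proof -
  have fin: "finite (insert 0 (cmod ` set_mset (proots (char_poly Qc))))" by simp
  have "\<forall>x\<in>insert 0 (cmod ` set_mset (proots (char_poly Qc))). x < 1"
  proof
    fix x assume "x \<in> insert 0 (cmod ` set_mset (proots (char_poly Qc)))"
    then consider "x = 0" | z where "z \<in># proots (char_poly Qc)" "x = cmod z" by auto
    then show "x < 1"
    proof cases
      case 2
      then have "poly (char_poly Qc) z = 0" using cpQ_nz by simp
      then have "poly (char_poly Rc) z = 0" unfolding cpR by simp
      then have "eigenvalue Rc z" using eigenvalue_root_char_poly[OF Rc_carrier] by simp
      then show ?thesis using Rc_eig_small 2 by (cases "z = 0") auto
    qed simp
  qed
  then show ?thesis unfolding slem_eq using Max_in[OF fin] by blast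
qed

lemma Rc_eig_le: assumes "eigenvalue Rc z" shows "cmod z \<le> slem n P"
proof -
  have "poly (char_poly Rc) z = 0" using eigenvalue_root_char_poly[OF Rc_carrier] assms by simp
  then have "z = 0 \<or> poly (char_poly Qc) z = 0" unfolding cpR by simp
  then show ?thesis
  proof
    assume "poly (char_poly Qc) z = 0"
    then have "z \<in># proots (char_poly Qc)" using cpQ_nz by simp
    then show ?thesis unfolding slem_eq by (intro Max_ge) auto
  qed (simp add: slem_nonneg)
qed

lemma Rc_pow_bound: assumes rho: "rho > slem n P"
  shows "\<exists>c. \<forall>k i j. i<n \<longrightarrow> j<n \<longrightarrow> cmod ((Rc ^\<^sub>m k) $$ (i,j)) \<le> c * rho^k"
proof -
  have rpos: "rho > 0" using rho slem_nonneg by linarith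
  define A where "A = complex_of_real (1/rho) \<cdot>\<^sub>m Rc"
  have Ac: "A \<in> carrier_mat n n" unfolding A_def using Rc_carrier by simp
  have "spectral_radius A \<in> cmod ` spectrum A" by (rule spectral_radius_mem_max(1)[OF Ac n_pos])
  then obtain mu where mu: "eigenvalue A mu" "spectral_radius A = cmod mu"
    unfolding spectrum_def by auto
  then obtain v where v: "v \<in> carrier_vec n" "v \<noteq> 0\<^sub>v n" "A *\<^sub>v v = mu \<cdot>\<^sub>v v"
    unfolding eigenvalue_def eigenvector_def using Ac by auto
  have "Rc *\<^sub>v v = (complex_of_real rho * mu) \<cdot>\<^sub>v v"
  proof -
    have av: "A *\<^sub>v v = complex_of_real (1/rho) \<cdot>\<^sub>v (Rc *\<^sub>v v)"
      unfolding A_def by (rule smult_mat_vec[OF Rc_carrier v(1)])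
    have "Rc *\<^sub>v v = (complex_of_real rho * complex_of_real (1/rho)) \<cdot>\<^sub>v (Rc *\<^sub>v v)"
      using rpos by simp
    also have "\<dots> = complex_of_real rho \<cdot>\<^sub>v (A *\<^sub>v v)"
      unfolding av by (rule smult_smult_assoc[symmetric])
    also have "\<dots> = complex_of_real rho \<cdot>\<^sub>v (mu \<cdot>\<^sub>v v)" unfolding v(3) ..
    also have "\<dots> = (complex_of_real rho * mu) \<cdot>\<^sub>v v" by (rule smult_smult_assoc)
    finally show ?thesis .
  qed
  then have "eigenvalue Rc (complex_of_real rho * mu)"
    unfolding eigenvalue_def eigenvector_def using v Rc_carrier by auto
  from Rc_eig_le[OF this] have "rho * cmod mu \<le> slem n P" using rpos by (simp add: norm_mult)
  then have "rho * cmod mu < rho * 1" using rho by linarith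
  then have "cmod mu < 1" using rpos by simp
  with mu have "spectral_radius A < 1" by simp
  from spectral_radius_jnf_norm_bound_less_1_upper_triangular[OF Ac this]
  obtain c where c: "\<forall>k. norm_bound (A ^\<^sub>m k) c" by auto
  have "cmod ((Rc ^\<^sub>m k) $$ (i,j)) \<le> c * rho^k" if ij: "i<n" "j<n" for k i j
  proof -
    have "cmod ((A ^\<^sub>m k) $$ (i,j)) \<le> c" using c ij Ac unfolding norm_bound_def by auto
    moreover have "(A ^\<^sub>m k) $$ (i,j) = complex_of_real (1/rho)^k * (Rc ^\<^sub>m k) $$ (i,j)"
      unfolding A_def by (rule smult_pow_entries[OF Rc_carrier ij])
    moreover have "cmod (1 / complex_of_real rho) = 1/rho" using rpos by (simp add: norm_divide)
    ultimately have "(1/rho)^k * cmod ((Rc ^\<^sub>m k) $$ (i,j)) \<le> c"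
      using rpos by (simp add: norm_mult norm_power)
    then show ?thesis using rpos by (simp add: field_simps)
  qed
  then show ?thesis by blast
qed

end

context rchain
begin

definition mean :: "(nat \<Rightarrow> real) \<Rightarrow> real" where
  "mean g = (\<Sum>i<n. pi i * g i)"

definition Rf :: "(nat \<Rightarrow> real) \<Rightarrow> nat \<Rightarrow> real" where
  "Rf g = (\<lambda>i. \<Sum>j<n. (P i j - pi j) * g j)"

lemma mean_Pf: "mean (Pf g) = mean g"
proof -
  have "mean (Pf g) = (\<Sum>j<n. (\<Sum>i<n. pi i * P i j) * g j)"
    unfolding mean_def Pf_def by (simp add: sum_distrib_left sum_distrib_right mult_ac) (rule sum.swap)
  also have "\<dots> = mean g" unfolding mean_def using stat by (intro sum.cong) auto
  finally show ?thesis .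
qed

lemma mean_iter: "mean ((Pf ^^ k) g) = mean g"
  by (induction k) (auto simp: mean_Pf)

lemma Pf_cong: "(\<And>j. j<n \<Longrightarrow> g j = h j) \<Longrightarrow> Pf g = Pf h"
  unfolding Pf_def by (intro ext sum.cong) auto

lemma Rf_cong: "(\<And>j. j<n \<Longrightarrow> g j = h j) \<Longrightarrow> Rf g = Rf h"
  unfolding Rf_def by (intro ext sum.cong) auto

lemma Rf_Pf: "Rf g i = Pf g i - mean g"
  unfolding Rf_def Pf_def mean_def by (simp add: left_diff_distrib sum_subtractf)

lemma Pf_Rf_iter: assumes "mean g = 0" shows "i<n \<Longrightarrow> (Pf ^^ k) g i = (Rf ^^ k) g i"
proof (induction k arbitrary: i)
  case 0 then show ?case by simp
next
  case (Suc k i)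
  have "(Rf ^^ Suc k) g i = Rf ((Rf ^^ k) g) i" by simp
  also have "\<dots> = Rf ((Pf ^^ k) g) i" using Suc.IH by (subst Rf_cong[of _ "(Pf ^^ k) g"]) auto
  also have "\<dots> = Pf ((Pf ^^ k) g) i" using mean_iter[of k g] assms by (simp add: Rf_Pf)
  finally show ?case by simp
qed

lemma Rf_iter: "i<n \<Longrightarrow> (Rf ^^ k) g i = (\<Sum>j<n. Re ((Rc ^\<^sub>m k) $$ (i,j)) * g j)"
proof (induction k arbitrary: g i)
  case 0
  have "(\<Sum>j<n. Re ((Rc ^\<^sub>m 0) $$ (i,j)) * g j) = (\<Sum>j<n. if j = i then g j else 0)"
    using 0 Rc_carrier by (intro sum.cong) auto
  then show ?case using 0 by simp
next
  case (Suc k g i)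
  have X: "Rc ^\<^sub>m k \<in> carrier_mat n n" using Rc_carrier by simp
  have "(Rf ^^ Suc k) g i = (Rf ^^ k) (Rf g) i" by (simp only: funpow_Suc_right o_apply)
  also have "\<dots> = (\<Sum>l<n. Re ((Rc ^\<^sub>m k) $$ (i,l)) * Rf g l)" using Suc by simp
  also have "\<dots> = (\<Sum>l<n. \<Sum>j<n. Re ((Rc ^\<^sub>m k) $$ (i,l)) * (P l j - pi j) * g j)"
    unfolding Rf_def by (simp add: sum_distrib_left mult_ac)
  also have "\<dots> = (\<Sum>j<n. \<Sum>l<n. Re ((Rc ^\<^sub>m k) $$ (i,l)) * (P l j - pi j) * g j)"
    by (rule sum.swap)
  also have "\<dots> = (\<Sum>j<n. Re ((Rc ^\<^sub>m Suc k) $$ (i,j)) * g j)"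
  proof (intro sum.cong refl)
    fix j assume "j \<in> {..<n}"
    then have j: "j<n" by simp
    have "(Rc ^\<^sub>m Suc k) $$ (i,j) = (\<Sum>l\<in>{0..<n}. (Rc ^\<^sub>m k) $$ (i,l) * complex_of_real (P l j - pi j))"
      using X Suc.prems j Rc_carrier unfolding Rc_def by (simp add: scalar_prod_def)
    then have "Re ((Rc ^\<^sub>m Suc k) $$ (i,j)) = (\<Sum>l<n. Re ((Rc ^\<^sub>m k) $$ (i,l)) * (P l j - pi j))"
      by (simp add: Re_sum atLeast0LessThan)
    then show "(\<Sum>l<n. Re ((Rc ^\<^sub>m k) $$ (i,l)) * (P l j - pi j) * g j) = Re ((Rc ^\<^sub>m Suc k) $$ (i,j)) * g j"
      by (simp add: sum_distrib_right)
  qed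
  finally show ?case .
qed

lemma ip_nonneg: "0 \<le> ip f f"
  unfolding ip_def
proof (intro sum_nonneg)
  fix i assume "i \<in> {..<n}"
  then have "0 \<le> pi i" using pi_nonneg by simp
  then have "0 \<le> pi i * (f i * f i)" by simp
  then show "0 \<le> pi i * f i * f i" by (simp add: mult.assoc)
qed

lemma ip_cs: "(ip f h)^2 \<le> ip f f * ip h h"
proof -
  have "0 \<le> (\<Sum>i<n. \<Sum>j<n. pi i * pi j * (f i * h j - f j * h i)^2)"
    using pi_nonneg by (intro sum_nonneg) auto
  also have "\<dots> = (\<Sum>i<n. \<Sum>j<n. (pi i * f i * f i) * (pi j * h j * h j))
      + (\<Sum>i<n. \<Sum>j<n. (pi j * f j * f j) * (pi i * h i * h i))
      - 2 * (\<Sum>i<n. \<Sum>j<n. (pi i * f i * h i) * (pi j * f j * h j))"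
    by (simp add: power2_diff sum_subtractf sum.distrib sum_distrib_left power2_eq_square algebra_simps)
  also have "\<dots> = 2 * (ip f f * ip h h) - 2 * (ip f h)^2"
  proof -
    have a: "(\<Sum>i<n. \<Sum>j<n. (pi i * f i * f i) * (pi j * h j * h j)) = ip f f * ip h h"
      unfolding ip_def by (simp add: sum_product)
    have b: "(\<Sum>i<n. \<Sum>j<n. (pi j * f j * f j) * (pi i * h i * h i)) = ip f f * ip h h"
    proof -
      have "(\<Sum>i<n. \<Sum>j<n. (pi j * f j * f j) * (pi i * h i * h i)) =
            (\<Sum>j<n. \<Sum>i<n. (pi j * f j * f j) * (pi i * h i * h i))" by (rule sum.swap)
      then show ?thesis unfolding ip_def by (simp add: sum_product)
    qed
    have c: "(\<Sum>i<n. \<Sum>j<n. (pi i * f i * h i) * (pi j * f j * h j)) = (ip f h)^2"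
      unfolding ip_def by (simp add: sum_product power2_eq_square)
    show ?thesis using a b c by simp
  qed
  finally show ?thesis by simp
qed

definition nrm :: "(nat \<Rightarrow> real) \<Rightarrow> real" where "nrm f = sqrt (ip f f)"

lemma nrm_nonneg: "0 \<le> nrm f" unfolding nrm_def by (rule real_sqrt_ge_zero[OF ip_nonneg])

lemma nrm_sq: "(nrm f)^2 = ip f f" unfolding nrm_def by (rule real_sqrt_pow2[OF ip_nonneg])

lemma ip_cs_nrm: "ip f h \<le> nrm f * nrm h"
proof -
  have "\<bar>ip f h\<bar> = sqrt ((ip f h)^2)" by simp
  also have "\<dots> \<le> sqrt (ip f f * ip h h)" using ip_cs by (rule real_sqrt_le_mono)
  also have "\<dots> = nrm f * nrm h" unfolding nrm_def by (simp add: real_sqrt_mult)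
  finally show ?thesis by simp
qed

lemma ip_iter_sym: "ip f ((Pf ^^ k) h) = ip ((Pf ^^ k) f) h"
proof (induction k arbitrary: f)
  case 0 then show ?case by simp
next
  case (Suc k f)
  have "ip f ((Pf ^^ Suc k) h) = ip f (Pf ((Pf ^^ k) h))" by simp
  also have "\<dots> = ip (Pf f) ((Pf ^^ k) h)" by (rule ip_P_sym)
  also have "\<dots> = ip ((Pf ^^ k) (Pf f)) h" by (rule Suc.IH)
  also have "\<dots> = ip ((Pf ^^ Suc k) f) h" by (simp only: funpow_Suc_right o_apply)
  finally show ?case .
qed

lemma iter_bound: assumes "mean g = 0" "rho > slem n P"
  shows "\<exists>K. \<forall>k. nrm ((Pf ^^ k) g) \<le> K * rho^k"
proof -
  have rpos: "rho > 0" using assms(2) slem_nonneg by linarith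
  obtain c where c: "\<forall>k i j. i<n \<longrightarrow> j<n \<longrightarrow> cmod ((Rc ^\<^sub>m k) $$ (i,j)) \<le> c * rho^k"
    using Rc_pow_bound[OF assms(2)] by blast
  define G where "G = (\<Sum>j<n. \<bar>g j\<bar>)"
  have pt: "\<bar>(Pf ^^ k) g i\<bar> \<le> c * G * rho^k" if i: "i<n" for k i
  proof -
    have "\<bar>(Pf ^^ k) g i\<bar> = \<bar>\<Sum>j<n. Re ((Rc ^\<^sub>m k) $$ (i,j)) * g j\<bar>"
      using Pf_Rf_iter[OF assms(1) i] Rf_iter[OF i] by simp
    also have "\<dots> \<le> (\<Sum>j<n. \<bar>Re ((Rc ^\<^sub>m k) $$ (i,j)) * g j\<bar>)" by (rule sum_abs)
    also have "\<dots> \<le> (\<Sum>j<n. c * rho^k * \<bar>g j\<bar>)"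
    proof (intro sum_mono)
      fix j assume "j \<in> {..<n}"
      then have "cmod ((Rc ^\<^sub>m k) $$ (i,j)) \<le> c * rho^k" using c i by auto
      then have "\<bar>Re ((Rc ^\<^sub>m k) $$ (i,j))\<bar> \<le> c * rho^k" using abs_Re_le_cmod order_trans by blast
      then show "\<bar>Re ((Rc ^\<^sub>m k) $$ (i,j)) * g j\<bar> \<le> c * rho^k * \<bar>g j\<bar>"
        by (simp add: abs_mult mult_right_mono)
    qed
    also have "\<dots> = c * G * rho^k" unfolding G_def by (simp add: sum_distrib_left mult_ac)
    finally show ?thesis .
  qed
  have "nrm ((Pf ^^ k) g) \<le> \<bar>c * G\<bar> * rho^k" for k
  proof -
    have "ip ((Pf ^^ k) g) ((Pf ^^ k) g) \<le> (\<Sum>i<n. pi i * (c * G * rho^k)^2)"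
      unfolding ip_def
    proof (intro sum_mono)
      fix i assume "i \<in> {..<n}"
      then have i: "i<n" by simp
      have "((Pf ^^ k) g i)^2 \<le> (c * G * rho^k)^2"
        using pt[OF i] by (metis abs_le_square_iff abs_of_nonneg abs_ge_zero order_trans power2_abs
              abs_le_iff abs_minus_cancel abs_idempotent)
      then show "pi i * (Pf ^^ k) g i * (Pf ^^ k) g i \<le> pi i * (c * G * rho ^ k)\<^sup>2"
        using pi_nonneg[OF i] by (simp add: power2_eq_square mult_left_mono mult.assoc)
    qed
    also have "\<dots> = (c * G * rho^k)^2" using pi_sum by (simp flip: sum_distrib_right)
    finally have "ip ((Pf ^^ k) g) ((Pf ^^ k) g) \<le> (\<bar>c * G\<bar> * rho^k)^2"
      using rpos by (simp add: power_mult_distrib)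
    then have "sqrt (ip ((Pf ^^ k) g) ((Pf ^^ k) g)) \<le> sqrt ((\<bar>c * G\<bar> * rho^k)^2)"
      by (rule real_sqrt_le_mono)
    then show ?thesis unfolding nrm_def using rpos by simp
  qed
  then show ?thesis by blast
qed

lemma gelfand_step: "(nrm ((Pf ^^ k) g))^2 \<le> nrm g * nrm ((Pf ^^ (2*k)) g)"
proof -
  have "(nrm ((Pf ^^ k) g))^2 = ip ((Pf ^^ k) g) ((Pf ^^ k) g)" by (rule nrm_sq)
  also have "\<dots> = ip g ((Pf ^^ k) ((Pf ^^ k) g))" by (rule ip_iter_sym[symmetric])
  also have "\<dots> = ip g ((Pf ^^ (2*k)) g)" by (simp add: mult_2 funpow_add)
  also have "\<dots> \<le> nrm g * nrm ((Pf ^^ (2*k)) g)" by (rule ip_cs_nrm)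
  finally show ?thesis .
qed

lemma gelfand_pow: "(nrm (Pf g))^(2^m) \<le> (nrm g)^(2^m - 1) * nrm ((Pf ^^ (2^m)) g)"
proof (induction m)
  case 0 then show ?case by simp
next
  case (Suc m)
  have "(nrm (Pf g))^(2^Suc m) = ((nrm (Pf g))^(2^m))^2" by (simp add: power_mult[symmetric] mult.commute)
  also have "\<dots> \<le> ((nrm g)^(2^m - 1) * nrm ((Pf ^^ (2^m)) g))^2"
    using Suc.IH nrm_nonneg by (intro power_mono) auto
  also have "\<dots> = (nrm g)^(2*(2^m - 1)) * (nrm ((Pf ^^ (2^m)) g))^2"
    by (simp add: power_mult_distrib power_mult[symmetric] mult.commute)
  also have "\<dots> \<le> (nrm g)^(2*(2^m - 1)) * (nrm g * nrm ((Pf ^^ (2*2^m)) g))"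
    using gelfand_step[of "2^m" g] nrm_nonneg by (intro mult_left_mono) auto
  also have "\<dots> = (nrm g)^(2^Suc m - 1) * nrm ((Pf ^^ (2^Suc m)) g)"
  proof -
    have h: "(2::nat)^m \<ge> 1" by simp
    have "2*(2^m - 1) + 1 = (2^Suc m - 1::nat)" using h by (simp, arith)
    then have "(nrm g)^(2*(2^m - 1)) * nrm g = (nrm g)^(2^Suc m - 1)" by (metis power_add power_one_right)
    then show ?thesis by (simp add: mult.assoc[symmetric])
  qed
  finally show ?case .
qed

lemma spectral_bound_rho: assumes "mean g = 0" "rho > slem n P"
  shows "nrm (Pf g) \<le> rho * nrm g"
proof (rule ccontr)
  assume nt: "\<not> ?thesis"
  have rpos: "rho > 0" using assms(2) slem_nonneg by linarith
  obtain K where K: "\<forall>k. nrm ((Pf ^^ k) g) \<le> K * rho^k" using iter_bound[OF assms] by blast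
  define a0 where "a0 = nrm g"
  define a1 where "a1 = nrm (Pf g)"
  have a0: "a0 \<ge> 0" and a1: "a1 \<ge> 0" unfolding a0_def a1_def by (auto simp: nrm_nonneg)
  have big: "a1 > rho * a0" using nt unfolding a0_def a1_def by simp
  have main: "a1^(2^m) \<le> a0^(2^m - 1) * (K * rho^(2^m))" for m
  proof -
    have "a1^(2^m) \<le> a0^(2^m - 1) * nrm ((Pf ^^ (2^m)) g)" unfolding a0_def a1_def by (rule gelfand_pow)
    also have "\<dots> \<le> a0^(2^m - 1) * (K * rho^(2^m))" using K a0 by (intro mult_left_mono) auto
    finally show ?thesis .
  qed
  show False
  proof (cases "a0 = 0")
    case True
    have "a1^2 \<le> 0" using main[of 1] True by simp
    then have "a1 = 0" using a1 by (simp add: power2_eq_square mult_le_0_iff)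
    then show False using big True by simp
  next
    case False
    then have a0p: "a0 > 0" using a0 by simp
    define q where "q = a1 / (rho * a0)"
    have q1: "q > 1" unfolding q_def using big a0p rpos by simp
    obtain m where m: "K / a0 < q^m" using real_arch_pow[OF q1] by blast
    have "q^m \<le> q^(2^m)" using q1 by (intro power_increasing) (auto intro: less_imp_le less_exp)
    moreover have "q^(2^m) \<le> K / a0"
    proof -
      have "a1^(2^m) \<le> a0^(2^m - 1) * (K * rho^(2^m))" by (rule main)
      then have "a1^(2^m) * a0 \<le> a0^(2^m - 1) * a0 * (K * rho^(2^m))"
        using a0p by (simp add: mult_right_mono mult_ac)
      also have "a0^(2^m - 1) * a0 = a0^(2^m)"
        by (metis One_nat_def Suc_pred pos2 power_Suc2 zero_less_power)
      finally have "a1^(2^m) * a0 \<le> a0^(2^m) * (K * rho^(2^m))" .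
      then have "a1^(2^m) / (rho * a0)^(2^m) \<le> K / a0"
        using a0p rpos by (simp add: field_simps power_mult_distrib)
      then show ?thesis unfolding q_def by (simp add: power_divide)
    qed
    ultimately show False using m by simp
  qed
qed

lemma spectral_bound: assumes "mean g = 0" shows "nrm (Pf g) \<le> slem n P * nrm g"
proof -
  have "nrm (Pf g) \<le> rho * nrm g" if "rho > slem n P" for rho
    using spectral_bound_rho[OF assms that] .
  then show ?thesis
  proof (cases "nrm g = 0")
    case True
    then show ?thesis using spectral_bound_rho[OF assms, of "slem n P + 1"] nrm_nonneg[of "Pf g"] by simp
  next
    case False
    then have ng: "nrm g > 0" using nrm_nonneg[of g] by simp
    have "nrm (Pf g) / nrm g \<le> slem n P"
    proof (rule dense_ge)
      fix y assume "slem n P < y"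
      then show "nrm (Pf g) / nrm g \<le> y" using spectral_bound_rho[OF assms \<open>slem n P < y\<close>] ng
        by (simp add: divide_le_eq)
    qed
    then show ?thesis using ng by (simp add: divide_le_eq mult.commute)
  qed
qed

lemma spectral_bound_iter: assumes "mean g = 0" shows "nrm ((Pf ^^ t) g) \<le> slem n P ^ t * nrm g"
proof (induction t)
  case 0 then show ?case by simp
next
  case (Suc t)
  have "nrm ((Pf ^^ Suc t) g) = nrm (Pf ((Pf ^^ t) g))" by simp
  also have "\<dots> \<le> slem n P * nrm ((Pf ^^ t) g)"
    using spectral_bound mean_iter assms by simp
  also have "\<dots> \<le> slem n P * (slem n P ^ t * nrm g)"
    using Suc.IH slem_nonneg by (rule mult_left_mono)
  finally show ?case by simp
qed

end

lemma sum_split_add: fixes t M :: nat shows "(\<Sum>k<t+M. f k) = (\<Sum>k<t. f k) + (\<Sum>m<M. f (t+m))"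
  by (induction M) (simp_all add: add.assoc)

locale hs = rchain +
  fixes S A :: "nat set"
  assumes AS: "A \<subseteq> S" and Sn: "S \<subseteq> {..<n}"
begin

definition lam where "lam = slem n P"
definition gam where "gam = 1 - lam"
definition s where "s = (\<Sum>x\<in>S. pi x)"
definition a where "a = (\<Sum>x\<in>A. pi x)"
definition rho where "rho = 1 - gam * s"

definition one :: "nat \<Rightarrow> real" where "one = (\<lambda>_. 1)"
definition Dm :: "(nat \<Rightarrow> real) \<Rightarrow> nat \<Rightarrow> real" where "Dm g = (\<lambda>i. if i \<in> S then 0 else g i)"
definition T where "T g = Dm (Pf g)"
definition Ts where "Ts g = Pf (Dm g)"
definition indA :: "nat \<Rightarrow> real" where "indA = (\<lambda>i. if i \<in> A then 1 else 0)"

lemma finS: "finite S" using Sn finite_subset by blast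
lemma finA: "finite A" using AS finS finite_subset by blast

lemma lam_nonneg: "0 \<le> lam" unfolding lam_def by (rule slem_nonneg)
lemma gam_pos: "0 < gam" unfolding gam_def lam_def using slem_lt1 by simp
lemma gam_le1: "gam \<le> 1" unfolding gam_def using lam_nonneg by simp

lemma s_nonneg: "0 \<le> s" unfolding s_def using Sn pi_nonneg by (intro sum_nonneg) auto
lemma s_le1: "s \<le> 1"
proof -
  have "s \<le> (\<Sum>x<n. pi x)" unfolding s_def using Sn pi_nonneg by (intro sum_mono2) auto
  then show ?thesis using pi_sum by simp
qed
lemma a_nonneg: "0 \<le> a" unfolding a_def using AS Sn pi_nonneg by (intro sum_nonneg) auto

lemma rho_nonneg: "0 \<le> rho" unfolding rho_def using gam_le1 s_le1 gam_pos s_nonneg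
  by (metis diff_ge_0_iff_ge mult_le_one less_imp_le)
lemma lam_le_rho: "lam \<le> rho"
proof -
  have "0 \<le> (1 - s) * (1 - lam)" using s_le1 slem_lt1 unfolding lam_def by (intro mult_nonneg_nonneg) auto
  then show ?thesis unfolding rho_def gam_def by (simp add: algebra_simps)
qed

lemma ip_add_left: "ip (\<lambda>i. f i + g i) h = ip f h + ip g h"
  unfolding ip_def by (simp add: algebra_simps sum.distrib)
lemma ip_add_right: "ip h (\<lambda>i. f i + g i) = ip h f + ip h g"
  unfolding ip_def by (simp add: algebra_simps sum.distrib)
lemma ip_scale_left: "ip (\<lambda>i. c * f i) h = c * ip f h"
  unfolding ip_def by (simp add: sum_distrib_left mult_ac)
lemma ip_scale_right: "ip h (\<lambda>i. c * f i) = c * ip h f"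
  unfolding ip_def by (simp add: sum_distrib_left mult_ac)
lemma ip_diff_left: "ip (\<lambda>i. f i - g i) h = ip f h - ip g h"
  unfolding ip_def by (simp add: algebra_simps sum_subtractf)
lemma ip_diff_right: "ip h (\<lambda>i. f i - g i) = ip h f - ip h g"
  unfolding ip_def by (simp add: algebra_simps sum_subtractf)
lemma Pf_add: "Pf (\<lambda>i. f i + g i) = (\<lambda>i. Pf f i + Pf g i)"
  unfolding Pf_def by (simp add: algebra_simps sum.distrib)
lemma Pf_diff: "Pf (\<lambda>i. f i - g i) = (\<lambda>i. Pf f i - Pf g i)"
  unfolding Pf_def by (simp add: algebra_simps sum_subtractf)
lemma Pf_scale: "Pf (\<lambda>i. c * f i) = (\<lambda>i. c * Pf f i)"
  unfolding Pf_def by (simp add: sum_distrib_left mult_ac)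
lemma Pf_const: "i<n \<Longrightarrow> Pf (\<lambda>_. c) i = c"
  unfolding Pf_def using P_row by (simp flip: sum_distrib_right)

lemma ip_cong: "(\<And>i. i<n \<Longrightarrow> f i = f' i) \<Longrightarrow> (\<And>i. i<n \<Longrightarrow> g i = g' i) \<Longrightarrow> ip f g = ip f' g'"
  unfolding ip_def by (intro sum.cong) auto

lemma mean_ip: "mean f = ip one f" unfolding mean_def ip_def one_def by simp

lemma ip_one_one: "ip one one = 1" unfolding ip_def one_def using pi_sum by simp

lemma quad_bound:
  assumes sup: "\<And>i. i \<in> S \<Longrightarrow> f i = 0"
  shows "\<bar>ip f (Pf f)\<bar> \<le> rho * ip f f"
proof -
  define c where "c = mean f"
  define g where "g = (\<lambda>i. f i - c)"
  have fg: "f = (\<lambda>i. c + g i)" unfolding g_def by simp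
  have mg: "mean g = 0" unfolding g_def mean_def c_def
    using pi_sum by (simp add: right_diff_distrib sum_subtractf flip: sum_distrib_right mean_def)
  have mPg: "ip one (Pf g) = 0" using mean_Pf[of g] mg by (simp add: mean_ip)
  have g1: "ip g one = 0" using mg by (simp add: mean_ip ip_sym)
  have Pfc: "ip f (Pf f) = c^2 + ip g (Pf g)"
  proof -
    have "ip f (Pf f) = ip (\<lambda>i. c * one i + g i) (\<lambda>i. c * one i + Pf g i)"
      by (rule ip_cong) (auto simp: fg Pf_add Pf_const one_def)
    also have "\<dots> = c^2 * ip one one + c * ip one (Pf g) + c * ip g one + ip g (Pf g)"
      by (simp add: ip_add_left ip_add_right ip_scale_left ip_scale_right power2_eq_square algebra_simps)
    finally show ?thesis using mPg g1 ip_one_one by simp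
  qed
  have ffc: "ip f f = c^2 + ip g g"
  proof -
    have "ip f f = ip (\<lambda>i. c * one i + g i) (\<lambda>i. c * one i + g i)"
      by (rule ip_cong) (auto simp: fg one_def)
    also have "\<dots> = c^2 * ip one one + c * ip one g + c * ip g one + ip g g"
      by (simp add: ip_add_left ip_add_right ip_scale_left ip_scale_right power2_eq_square algebra_simps)
    finally show ?thesis using g1 ip_one_one by (simp add: ip_sym[of one g])
  qed
  have gPg: "\<bar>ip g (Pf g)\<bar> \<le> lam * ip g g"
  proof -
    have "\<bar>ip g (Pf g)\<bar> \<le> nrm g * nrm (Pf g)"
      using ip_cs_nrm[of g "Pf g"] ip_cs_nrm[of "\<lambda>i. - g i" "Pf g"] 
      by (simp add: ip_def sum_negf nrm_def abs_le_iff)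
    also have "\<dots> \<le> nrm g * (lam * nrm g)"
      using spectral_bound[OF mg] nrm_nonneg unfolding lam_def by (intro mult_left_mono) auto
    also have "\<dots> = lam * ip g g" using nrm_sq[of g] by (simp add: power2_eq_square mult_ac)
    finally show ?thesis .
  qed
  have c2: "c^2 \<le> ip f f * (1 - s)"
  proof -
    have "c = ip f (Dm one)" unfolding c_def mean_def ip_def Dm_def one_def
      using sup by (intro sum.cong) auto
    then have "c^2 \<le> ip f f * ip (Dm one) (Dm one)" using ip_cs by simp
    moreover have "ip (Dm one) (Dm one) = 1 - s"
    proof -
      have "ip (Dm one) (Dm one) = (\<Sum>i<n. pi i) - (\<Sum>i\<in>S. pi i)"
      proof -
        have "(\<Sum>i<n. pi i) = (\<Sum>i\<in>S. pi i) + (\<Sum>i\<in>{..<n} - S. pi i)"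
          using Sn by (metis add.commute finite_lessThan sum.subset_diff)
        moreover have "ip (Dm one) (Dm one) = (\<Sum>i\<in>{..<n} - S. pi i)"
          unfolding ip_def Dm_def one_def by (rule sum.mono_neutral_cong_right) auto
        ultimately show ?thesis by simp
      qed
      then show ?thesis using pi_sum unfolding s_def by simp
    qed
    ultimately show ?thesis by simp
  qed
  have ggnn: "0 \<le> ip g g" by (rule ip_nonneg)
  have up: "ip f (Pf f) \<le> rho * ip f f"
  proof -
    have "ip f (Pf f) \<le> c^2 + lam * ip g g" using Pfc gPg by linarith
    also have "\<dots> = lam * ip f f + gam * c^2" using ffc unfolding gam_def by (simp add: algebra_simps)
    also have "\<dots> \<le> lam * ip f f + gam * (ip f f * (1 - s))"
      using c2 gam_pos by (intro add_left_mono mult_left_mono) auto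
    also have "\<dots> = rho * ip f f" unfolding rho_def gam_def by (simp add: algebra_simps)
    finally show ?thesis .
  qed
  have lo: "- (rho * ip f f) \<le> ip f (Pf f)"
  proof -
    have "- (lam * ip g g) \<le> ip g (Pf g)" using gPg by linarith
    then have "c^2 - lam * ip g g \<le> ip f (Pf f)" using Pfc by linarith
    moreover have "lam * ip g g \<le> lam * ip f f" using ffc lam_nonneg by (intro mult_left_mono) auto
    moreover have "lam * ip f f \<le> rho * ip f f" using lam_le_rho ip_nonneg by (intro mult_right_mono) auto
    ultimately show ?thesis by (smt (verit) zero_le_power2)
  qed
  show ?thesis using up lo by linarith
qed

lemma Dm_sup: "i \<in> S \<Longrightarrow> Dm g i = 0" unfolding Dm_def by simp

lemma ip_Dm_Pf: assumes "\<And>i. i \<in> S \<Longrightarrow> h i = 0" shows "ip h (Pf f) = ip h (Dm (Pf f))"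
  unfolding ip_def Dm_def using assms by (intro sum.cong) auto

lemma K_bound:
  assumes sup: "\<And>i. i \<in> S \<Longrightarrow> f i = 0"
  shows "ip (Dm (Pf f)) (Dm (Pf f)) \<le> rho^2 * ip f f"
proof -
  define k where "k = Dm (Pf f)"
  define X where "X = ip k k"
  define Y where "Y = ip f f"
  have X0: "0 \<le> X" unfolding X_def by (rule ip_nonneg)
  have Y0: "0 \<le> Y" unfolding Y_def by (rule ip_nonneg)
  have ksup: "\<And>i. i \<in> S \<Longrightarrow> k i = 0" unfolding k_def by (rule Dm_sup)
  have key: "4 * t * X \<le> rho * (2 * Y + 2 * t^2 * X)" for t
  proof -
    define h where "h = (\<lambda>i. t * k i)"
    have hsup: "\<And>i. i \<in> S \<Longrightarrow> h i = 0" unfolding h_def using ksup by simp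
    define u where "u = (\<lambda>i. f i + h i)"
    define v where "v = (\<lambda>i. f i - h i)"
    have usup: "\<And>i. i \<in> S \<Longrightarrow> u i = 0" unfolding u_def using sup hsup by simp
    have vsup: "\<And>i. i \<in> S \<Longrightarrow> v i = 0" unfolding v_def using sup hsup by simp
    have sym: "ip f (Pf h) = ip h (Pf f)" using ip_P_sym[of f h] ip_sym by simp
    have Qu: "ip u (Pf u) = ip f (Pf f) + 2 * ip h (Pf f) + ip h (Pf h)"
      unfolding u_def Pf_add ip_add_left ip_add_right using sym by simp
    have Qv: "ip v (Pf v) = ip f (Pf f) - 2 * ip h (Pf f) + ip h (Pf h)"
      unfolding v_def Pf_diff ip_diff_left ip_diff_right using sym by simp
    have uu: "ip u u = Y + 2 * ip f h + ip h h"
      unfolding u_def Y_def ip_add_left ip_add_right using ip_sym[of h f] by simp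
    have vv: "ip v v = Y - 2 * ip f h + ip h h"
      unfolding v_def Y_def ip_diff_left ip_diff_right using ip_sym[of h f] by simp
    have hh: "ip h h = t^2 * X" unfolding h_def X_def ip_scale_left ip_scale_right
      by (simp add: power2_eq_square)
    have hPf: "ip h (Pf f) = t * X"
    proof -
      have "ip h (Pf f) = ip h (Dm (Pf f))" by (rule ip_Dm_Pf[OF hsup])
      then show ?thesis unfolding h_def X_def k_def ip_scale_left by simp
    qed
    have "4 * ip h (Pf f) = ip u (Pf u) - ip v (Pf v)" using Qu Qv by simp
    also have "\<dots> \<le> rho * ip u u + rho * ip v v"
      using quad_bound[of u, OF usup] quad_bound[of v, OF vsup] by linarith
    also have "\<dots> = rho * (ip u u + ip v v)" by (simp add: algebra_simps)
    also have "ip u u + ip v v = 2 * Y + 2 * t^2 * X" using uu vv hh by simp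
    finally have "4 * ip h (Pf f) \<le> rho * (2 * Y + 2 * t^2 * X)" .
    then show ?thesis using hPf by simp
  qed
  have "X \<le> rho^2 * Y"
  proof (cases "rho = 0")
    case True
    then show ?thesis using key[of 1] X0 by simp
  next
    case False
    then have rp: "rho > 0" using rho_nonneg by simp
    have "4 * (1/rho) * X \<le> rho * (2 * Y + 2 * (1/rho)^2 * X)" by (rule key)
    then have "4 * X \<le> rho^2 * (2 * Y) + 2 * X"
      using rp by (simp add: field_simps power2_eq_square)
    then show ?thesis by simp
  qed
  then show ?thesis unfolding X_def Y_def k_def .
qed

lemma K_bound_nrm:
  assumes sup: "\<And>i. i \<in> S \<Longrightarrow> f i = 0"
  shows "nrm (T f) \<le> rho * nrm f"
proof -
  have "nrm (T f) = sqrt (ip (Dm (Pf f)) (Dm (Pf f)))" unfolding nrm_def T_def ..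
  also have "\<dots> \<le> sqrt (rho^2 * ip f f)" using K_bound[OF sup] by (rule real_sqrt_le_mono)
  also have "\<dots> = rho * nrm f" unfolding nrm_def using rho_nonneg by (simp add: real_sqrt_mult)
  finally show ?thesis .
qed

lemma T_sup: "i \<in> S \<Longrightarrow> T f i = 0" unfolding T_def by (rule Dm_sup)

lemma T_sup_iter: "i \<in> S \<Longrightarrow> (T ^^ Suc j) f i = 0"
  unfolding funpow.simps(2) o_apply by (rule T_sup)

lemma T_iter_one_nrm: "nrm ((T ^^ Suc j) one) \<le> rho^j"
proof (induction j)
  case 0
  have "ip (T one) (T one) = ip (Dm one) (Dm one)"
    by (rule ip_cong) (auto simp: T_def Dm_def Pf_const one_def)
  also have "\<dots> \<le> ip one one"
    unfolding ip_def Dm_def one_def using pi_nonneg by (intro sum_mono) auto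
  also have "\<dots> = 1" by (rule ip_one_one)
  finally have "ip (T one) (T one) \<le> 1" .
  then have "nrm (T one) \<le> 1" unfolding nrm_def by simp
  then show ?case by simp
next
  case (Suc j)
  have "nrm ((T ^^ Suc (Suc j)) one) = nrm (T ((T ^^ Suc j) one))" by simp
  also have "\<dots> \<le> rho * nrm ((T ^^ Suc j) one)"
    by (rule K_bound_nrm) (rule T_sup_iter)
  also have "\<dots> \<le> rho * rho^j" using Suc.IH rho_nonneg by (rule mult_left_mono)
  finally show ?case by simp
qed

definition q where "q m = ip one ((T ^^ m) one)"

lemma q_bound: "q m \<le> rho^(m - 1)"
proof (cases m)
  case 0 then show ?thesis unfolding q_def using ip_one_one by simp
next
  case (Suc j)
  have "q m = ip (T one) ((T ^^ Suc j) one)"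
    unfolding q_def Suc ip_def
    by (intro sum.cong refl) (auto simp: T_def Dm_def Pf_const one_def T_sup_iter)
  also have "\<dots> \<le> nrm (T one) * nrm ((T ^^ Suc j) one)" by (rule ip_cs_nrm)
  also have "\<dots> \<le> 1 * rho^j"
    using T_iter_one_nrm[of 0] T_iter_one_nrm[of j] nrm_nonneg
    by (intro mult_mono) auto
  finally show ?thesis using Suc by simp
qed

lemma T_lin: "T (\<lambda>i. c * f i + g i) = (\<lambda>i. c * T f i + T g i)"
  unfolding T_def Dm_def Pf_def by (auto simp: sum.distrib sum_distrib_left algebra_simps)

lemma T_cong: "(\<And>j. j<n \<Longrightarrow> f j = g j) \<Longrightarrow> T f = T g"
  unfolding T_def using Pf_cong by metis

lemma T_iter_lin: "(T ^^ m) (\<lambda>i. c * f i + g i) = (\<lambda>i. c * (T ^^ m) f i + (T ^^ m) g i)"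
  by (induction m) (simp_all add: T_lin)

lemma T_iter_cong: "(\<And>j. j<n \<Longrightarrow> f j = g j) \<Longrightarrow> i<n \<Longrightarrow> (T ^^ m) f i = (T ^^ m) g i"
proof (induction m arbitrary: i)
  case 0 then show ?case by simp
next
  case (Suc m i)
  have "T ((T ^^ m) f) = T ((T ^^ m) g)" using Suc by (intro T_cong) auto
  then show ?case by simp
qed

lemma Pf_nonneg: "(\<And>j. j<n \<Longrightarrow> 0 \<le> f j) \<Longrightarrow> i<n \<Longrightarrow> 0 \<le> Pf f i"
  unfolding Pf_def using P_nonneg by (intro sum_nonneg mult_nonneg_nonneg) auto

lemma Pf_mono: "(\<And>j. j<n \<Longrightarrow> f j \<le> g j) \<Longrightarrow> i<n \<Longrightarrow> Pf f i \<le> Pf g i"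
  unfolding Pf_def using P_nonneg by (intro sum_mono mult_left_mono) auto

lemma T_nonneg: "(\<And>j. j<n \<Longrightarrow> 0 \<le> f j) \<Longrightarrow> i<n \<Longrightarrow> 0 \<le> T f i"
  unfolding T_def Dm_def using Pf_nonneg by auto

lemma T_mono: "(\<And>j. j<n \<Longrightarrow> f j \<le> g j) \<Longrightarrow> i<n \<Longrightarrow> T f i \<le> T g i"
  unfolding T_def Dm_def using Pf_mono by auto

lemma T_le_Pf: "(\<And>j. j<n \<Longrightarrow> 0 \<le> f j) \<Longrightarrow> i<n \<Longrightarrow> T f i \<le> Pf f i"
  unfolding T_def Dm_def using Pf_nonneg by auto

lemma T_iter_nonneg: "(\<And>j. j<n \<Longrightarrow> 0 \<le> f j) \<Longrightarrow> i<n \<Longrightarrow> 0 \<le> (T ^^ m) f i"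
proof (induction m arbitrary: i)
  case 0 then show ?case by simp
next
  case (Suc m) then show ?case by (simp add: T_nonneg)
qed

lemma Pf_iter_nonneg: "(\<And>j. j<n \<Longrightarrow> 0 \<le> f j) \<Longrightarrow> i<n \<Longrightarrow> 0 \<le> (Pf ^^ m) f i"
proof (induction m arbitrary: i)
  case 0 then show ?case by simp
next
  case (Suc m) then show ?case by (simp add: Pf_nonneg)
qed

lemma T_iter_mono: "(\<And>j. j<n \<Longrightarrow> f j \<le> g j) \<Longrightarrow> i<n \<Longrightarrow> (T ^^ m) f i \<le> (T ^^ m) g i"
proof (induction m arbitrary: i)
  case 0 then show ?case by simp
next
  case (Suc m) then show ?case by (simp add: T_mono)
qed

lemma T_iter_le: "(\<And>j. j<n \<Longrightarrow> 0 \<le> f j) \<Longrightarrow> i<n \<Longrightarrow> (T ^^ m) f i \<le> (Pf ^^ m) f i"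
proof (induction m arbitrary: i)
  case 0 then show ?case by simp
next
  case (Suc m i)
  have "(T ^^ Suc m) f i = T ((T ^^ m) f) i" by simp
  also have "\<dots> \<le> Pf ((T ^^ m) f) i" using Suc.prems T_iter_nonneg by (intro T_le_Pf) auto
  also have "\<dots> \<le> Pf ((Pf ^^ m) f) i" using Suc by (intro Pf_mono) auto
  finally show ?case by simp
qed

lemma Pf_iter_const_add: "i<n \<Longrightarrow> (Pf ^^ t) (\<lambda>j. c + g j) i = c + (Pf ^^ t) g i"
proof (induction t arbitrary: i)
  case 0 then show ?case by simp
next
  case (Suc t i)
  have "(Pf ^^ Suc t) (\<lambda>j. c + g j) i = Pf ((Pf ^^ t) (\<lambda>j. c + g j)) i" by simp
  also have "\<dots> = Pf (\<lambda>j. c + (Pf ^^ t) g j) i" using Suc.IH by (subst Pf_cong) auto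
  also have "\<dots> = c + Pf ((Pf ^^ t) g) i" using Suc.prems by (simp add: Pf_add Pf_const)
  finally show ?case by simp
qed

lemma ip_Dm_adj: "ip u (Dm g) = ip (Dm u) g"
  unfolding ip_def Dm_def by (intro sum.cong) auto

lemma ip_T_adj: "ip u (T g) = ip (Ts u) g"
  unfolding T_def Ts_def using ip_Dm_adj ip_P_sym by metis

lemma ip_T_iter_adj: "ip u ((T ^^ m) g) = ip ((Ts ^^ m) u) g"
proof (induction m arbitrary: u)
  case 0 then show ?case by simp
next
  case (Suc m u)
  have "ip u ((T ^^ Suc m) g) = ip (Ts u) ((T ^^ m) g)" by (simp add: ip_T_adj)
  also have "\<dots> = ip ((Ts ^^ m) (Ts u)) g" by (rule Suc.IH)
  also have "\<dots> = ip ((Ts ^^ Suc m) u) g" by (simp only: funpow_Suc_right o_apply)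
  finally show ?case .
qed

lemma Ts_range: assumes "\<And>j. j<n \<Longrightarrow> 0 \<le> u j \<and> u j \<le> 1" "i<n"
  shows "0 \<le> Ts u i \<and> Ts u i \<le> 1"
proof
  have D: "\<And>j. j<n \<Longrightarrow> 0 \<le> Dm u j \<and> Dm u j \<le> 1" unfolding Dm_def using assms(1) by auto
  show "0 \<le> Ts u i" unfolding Ts_def using D assms(2) by (intro Pf_nonneg) auto
  have "Ts u i \<le> Pf (\<lambda>_. 1) i" unfolding Ts_def using D assms(2) by (intro Pf_mono) auto
  then show "Ts u i \<le> 1" using Pf_const[OF assms(2)] by simp
qed

lemma Ts_iter_range: "i<n \<Longrightarrow> 0 \<le> (Ts ^^ m) one i \<and> (Ts ^^ m) one i \<le> 1"
proof (induction m arbitrary: i)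
  case 0 then show ?case by (simp add: one_def)
next
  case (Suc m) then show ?case by (simp add: Ts_range)
qed

lemma nrm_w: "nrm ((Ts ^^ m) one) \<le> sqrt (q m)"
proof -
  define w where "w = (Ts ^^ m) one"
  have "ip w w \<le> ip w one"
    unfolding ip_def one_def
  proof (intro sum_mono)
    fix i assume "i \<in> {..<n}"
    then have i: "i<n" by simp
    then have "w i * w i \<le> w i" using Ts_iter_range[OF i, of m] unfolding w_def
      by (intro mult_left_le) auto
    then show "pi i * w i * w i \<le> pi i * w i * 1"
      using pi_nonneg[OF i] by (simp add: mult.assoc mult_left_mono)
  qed
  also have "ip w one = q m" unfolding q_def w_def using ip_T_iter_adj[of one m one] ip_sym by simp
  finally show ?thesis unfolding nrm_def w_def by (rule real_sqrt_le_mono)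
qed

definition trm :: "nat \<Rightarrow> real" where "trm k = ip one ((T ^^ k) indA)"

lemma indA_nonneg: "0 \<le> indA j" unfolding indA_def by simp

lemma ip_one_mono: "(\<And>i. i<n \<Longrightarrow> f i \<le> g i) \<Longrightarrow> ip one f \<le> ip one g"
  unfolding ip_def one_def using pi_nonneg by (auto intro!: sum_mono mult_left_mono)

lemma mean_indA: "mean indA = a"
proof -
  have An: "A \<subseteq> {..<n}" using AS Sn by auto
  have "mean indA = (\<Sum>i<n. if i \<in> A then pi i else 0)"
    unfolding mean_def indA_def by (intro sum.cong) auto
  also have "\<dots> = (\<Sum>i\<in>A. pi i)"
    using An by (simp add: sum.If_cases Int_absorb1)
  finally show ?thesis unfolding a_def .
qed

lemma trm_nonneg: "0 \<le> trm k"
  unfolding trm_def ip_def one_def using pi_nonneg T_iter_nonneg[OF indA_nonneg]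
  by (auto intro!: sum_nonneg)

lemma trm_le_a: "trm k \<le> a"
proof -
  have "trm k \<le> ip one ((Pf ^^ k) indA)" unfolding trm_def
    by (intro ip_one_mono T_iter_le indA_nonneg)
  also have "\<dots> = a" using mean_iter[of k indA] mean_indA by (simp add: mean_ip)
  finally show ?thesis .
qed

lemma ip_indA_indA: "ip indA indA = a"
  using mean_indA unfolding mean_def ip_def indA_def by (simp add: if_distrib cong: if_cong)

lemma ip_indA_one: "ip indA one = a"
  using mean_indA unfolding mean_ip by (simp add: ip_sym)

lemma q_nonneg: "0 \<le> q m"
  unfolding q_def ip_def one_def using pi_nonneg T_iter_nonneg[of one] by (auto intro!: sum_nonneg simp: one_def)

lemma trm_shift: "trm (t+m) \<le> a * q m + sqrt (q m) * (lam^t * sqrt a)"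
proof -
  define e where "e = (\<lambda>i. indA i - a * one i)"
  define E where "E = (Pf ^^ t) e"
  have me: "mean e = 0"
    unfolding mean_ip e_def ip_diff_right ip_scale_right using ip_indA_one ip_one_one
    by (simp add: ip_sym)
  have ee: "ip e e \<le> a"
  proof -
    have "ip e e = ip indA indA - 2 * a * ip indA one + a^2 * ip one one"
      unfolding e_def ip_diff_left ip_diff_right ip_scale_left ip_scale_right
      by (simp add: ip_sym[of one indA] power2_eq_square algebra_simps)
    also have "\<dots> = a - a^2" using ip_indA_indA ip_indA_one ip_one_one by (simp add: power2_eq_square)
    finally show ?thesis by simp
  qed
  have ne: "nrm e \<le> sqrt a" unfolding nrm_def using ee by (rule real_sqrt_le_mono)
  have nE: "nrm E \<le> lam^t * sqrt a"
  proof -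
    have "nrm E \<le> lam^t * nrm e" unfolding E_def lam_def by (rule spectral_bound_iter[OF me])
    also have "\<dots> \<le> lam^t * sqrt a" using ne lam_nonneg by (intro mult_left_mono) auto
    finally show ?thesis .
  qed
  have h_eq: "(Pf ^^ t) indA j = a * one j + E j" if "j<n" for j
  proof -
    have "indA = (\<lambda>j. a + e j)" unfolding e_def one_def by simp
    then have "(Pf ^^ t) indA j = a + E j" unfolding E_def using Pf_iter_const_add[OF that] by simp
    then show ?thesis by (simp add: one_def)
  qed
  have "trm (t+m) = ip one ((T ^^ m) ((T ^^ t) indA))"
    unfolding trm_def by (simp add: funpow_add add.commute[of t m])
  also have "\<dots> \<le> ip one ((T ^^ m) ((Pf ^^ t) indA))"
    by (intro ip_one_mono T_iter_mono T_iter_le indA_nonneg)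
  also have "\<dots> = ip one ((T ^^ m) (\<lambda>i. a * one i + E i))"
    by (intro ip_cong refl T_iter_cong h_eq)
  also have "\<dots> = a * q m + ip one ((T ^^ m) E)"
    unfolding T_iter_lin ip_add_right ip_scale_right q_def ..
  also have "ip one ((T ^^ m) E) = ip ((Ts ^^ m) one) E" by (rule ip_T_iter_adj)
  also have "\<dots> \<le> nrm ((Ts ^^ m) one) * nrm E" by (rule ip_cs_nrm)
  also have "\<dots> \<le> sqrt (q m) * (lam^t * sqrt a)"
    using nrm_w nE nrm_nonneg q_nonneg by (intro mult_mono) auto
  finally show ?thesis by simp
qed

lemma geo_m1: fixes x :: real assumes "0 \<le> x" "x < 1"
  shows "(\<Sum>m<M. x^(m-1)) \<le> 1 + 1/(1-x)"
proof (cases M)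
  case 0 then show ?thesis using assms by simp
next
  case (Suc M')
  have "(\<Sum>m<M. x^(m-1)) = 1 + (\<Sum>m<M'. x^m)" unfolding Suc by (subst sum.lessThan_Suc_shift) simp
  also have "(\<Sum>m<M'. x^m) = (1 - x^M')/(1-x)" using assms by (simp add: sum_gp_strict)
  also have "\<dots> \<le> 1/(1-x)" using assms by (intro divide_right_mono) auto
  finally show ?thesis by simp
qed

lemma trm_sum_bound: assumes sp: "s > 0"
  shows "(\<Sum>k<K. trm k) \<le> t*a + a*(1 + 1/(gam*s)) + lam^t*sqrt a*(1 + 2/(gam*s))"
proof -
  have gs: "gam * s > 0" using gam_pos sp by simp
  have r1: "rho < 1" unfolding rho_def using gs by simp
  have r0: "0 \<le> rho" by (rule rho_nonneg)
  have omr: "1 - rho = gam * s" unfolding rho_def by simp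
  have sr0: "0 \<le> sqrt rho" "sqrt rho < 1" using r0 r1 by auto
  have c0: "0 \<le> lam^t * sqrt a" using lam_nonneg a_nonneg by simp
  have "(\<Sum>k<K. trm k) \<le> (\<Sum>k<t+K. trm k)"
    using trm_nonneg by (intro sum_mono2) auto
  also have "\<dots> = (\<Sum>k<t. trm k) + (\<Sum>m<K. trm (t+m))" by (rule sum_split_add)
  also have "(\<Sum>k<t. trm k) \<le> t * a"
    using sum_bounded_above[of "{..<t}" trm a] trm_le_a by simp
  also have "(\<Sum>m<K. trm (t+m)) \<le> (\<Sum>m<K. a * rho^(m-1) + sqrt rho^(m-1) * (lam^t * sqrt a))"
  proof (intro sum_mono)
    fix m assume "m \<in> {..<K}"
    have "trm (t+m) \<le> a * q m + sqrt (q m) * (lam^t * sqrt a)" by (rule trm_shift)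
    also have "\<dots> \<le> a * rho^(m-1) + sqrt (rho^(m-1)) * (lam^t * sqrt a)"
      using q_bound[of m] a_nonneg c0 by (intro add_mono mult_left_mono mult_right_mono real_sqrt_le_mono) auto
    finally show "trm (t+m) \<le> a * rho^(m-1) + sqrt rho^(m-1) * (lam^t * sqrt a)"
      by (simp add: real_sqrt_power)
  qed
  also have "\<dots> = a * (\<Sum>m<K. rho^(m-1)) + (lam^t * sqrt a) * (\<Sum>m<K. sqrt rho^(m-1))"
    by (simp add: sum.distrib sum_distrib_left mult_ac)
  also have "\<dots> \<le> a * (1 + 1/(1-rho)) + (lam^t * sqrt a) * (1 + 1/(1 - sqrt rho))"
    using geo_m1[OF r0 r1] geo_m1[OF sr0] a_nonneg c0 by (intro add_mono mult_left_mono) auto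
  also have "1/(1 - sqrt rho) \<le> 2/(1-rho)"
  proof -
    have "1 - rho = (1 - sqrt rho) * (1 + sqrt rho)" using r0 by (simp add: algebra_simps)
    also have "\<dots> \<le> (1 - sqrt rho) * 2" using sr0 by (intro mult_left_mono) auto
    finally have "1 - rho \<le> (1 - sqrt rho) * 2" .
    then show ?thesis using sr0 r1 by (simp add: field_simps)
  qed
  finally have "(\<Sum>k<K. trm k) \<le> t * a + (a * (1 + 1/(1-rho)) + (lam^t * sqrt a) * (1 + 2/(1-rho)))"
    using c0 by (simp add: mult_left_mono)
  then show ?thesis unfolding omr by (simp add: mult_ac)
qed

end

lemma final_arith:
  fixes a s gam eps :: real
  assumes e0: "0 < eps" and e1: "eps < exp (-1)" and a0: "0 < a" and aes: "a \<le> eps * s"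
    and s0: "0 < s" and s1: "s \<le> 1" and g0: "0 < gam" and g1: "gam \<le> 1"
  shows "\<exists>t::nat. t*a + a*(1 + 1/(gam*s)) + (1-gam)^t*sqrt a*(1 + 2/(gam*s)) \<le> 7 * (eps * ln (1/eps)) / gam"
proof -
  define lam where "lam = 1 - gam"
  have l0: "0 \<le> lam" unfolding lam_def using g1 by simp
  define E where "E = eps * ln (1/eps)"
  have lnbig: "1 < ln (1/eps)"
  proof -
    have "exp 1 < 1/eps" using e1 e0 by (simp add: exp_minus field_simps)
    then have "ln (exp 1) < ln (1/eps)" using e0 by (subst ln_less_cancel_iff) auto
    then show ?thesis by simp
  qed
  have epsE: "eps \<le> E" unfolding E_def using lnbig e0 by simp
  have es0: "0 < eps * s" using e0 s0 by simp
  have ne: "eps \<noteq> 0" "s \<noteq> 0" using e0 s0 by auto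
  have es1: "eps * s < 1"
  proof -
    have "eps < 1" using e1 by (smt (verit) exp_less_one_iff)
    moreover have "eps * s \<le> eps" using s1 e0 by (intro mult_left_le) auto
    ultimately show ?thesis by linarith
  qed
  define l where "l = ln (sqrt a / (eps * s))"
  define L where "L = max 0 l"
  define t where "t = nat \<lceil>L / gam\<rceil>"
  have L0: "0 \<le> L" unfolding L_def by simp
  have tge: "L / gam \<le> real t" unfolding t_def using L0 g0
    by (simp add: of_nat_nat le_of_int_ceiling)
  have tle: "real t \<le> L / gam + 1" unfolding t_def using L0 g0 ceiling_correct[of "L/gam"]
    by (simp add: of_nat_nat)
  have lamexp: "lam \<le> exp (- gam)" unfolding lam_def using exp_ge_add_one_self[of "-gam"] by simp
  have "lam^t \<le> exp (- gam)^t" by (rule power_mono[OF lamexp l0])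
  also have "\<dots> = exp (- (gam * real t))" by (simp add: exp_of_nat_mult[symmetric] mult_ac)
  also have "\<dots> \<le> exp (- L)" using tge g0 by (simp add: field_simps)
  also have "\<dots> \<le> exp (- l)" unfolding L_def by simp
  also have "\<dots> = eps * s / sqrt a"
  proof -
    have "exp l = sqrt a / (eps * s)" unfolding l_def using a0 es0 by (simp add: exp_ln)
    then show ?thesis by (simp add: exp_minus)
  qed
  finally have lt: "lam^t \<le> eps * s / sqrt a" .
  have lts: "lam^t * sqrt a \<le> eps * s" using lt a0 by (simp add: field_simps)
  have esl: "eps * s \<le> eps" using s1 e0 by (intro mult_left_le) auto
  have aeps: "a \<le> eps" using aes esl by linarith
  have eg: "eps \<le> eps / gam"
  proof -
    have "eps * gam \<le> eps" using g1 e0 by (intro mult_left_le) auto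
    then show ?thesis using g0 by (simp add: le_divide_eq)
  qed
  have part1: "lam^t * sqrt a * (1 + 2/(gam*s)) \<le> 3 * eps / gam"
  proof -
    have "lam^t * sqrt a * (1 + 2/(gam*s)) \<le> eps * s * (1 + 2/(gam*s))"
      using lts g0 s0 by (intro mult_right_mono) auto
    also have "\<dots> = eps * s + 2 * eps / gam" using s0 g0 by (simp add: field_simps)
    also have "eps * s \<le> eps / gam" using esl eg by linarith
    finally show ?thesis by simp
  qed
  have Lle: "L \<le> ln (1/(eps*s)) / 2"
  proof -
    have "l = ln (sqrt a) - ln (eps * s)" unfolding l_def using a0 es0 e0 s0 by (simp add: ln_div ne)
    also have "ln (sqrt a) \<le> ln (sqrt (eps * s))" using a0 aes by simp
    also have "ln (sqrt (eps * s)) = ln (eps * s) / 2" using es0 by (simp add: ln_sqrt)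
    finally have "l \<le> - ln (eps * s) / 2" by simp
    moreover have "- ln (eps * s) / 2 = ln (1/(eps*s)) / 2" using es0 by (simp add: ln_div ne)
    moreover have "0 \<le> ln (1/(eps*s))" using es0 es1 by simp
    ultimately show ?thesis unfolding L_def by simp
  qed
  have slog: "s * ln (1/s) \<le> 1"
  proof -
    have "ln (1/s) \<le> 1/s - 1" using s0 by (intro ln_le_minus_one) simp
    then have "s * ln (1/s) \<le> s * (1/s - 1)" using s0 by (intro mult_left_mono) auto
    also have "\<dots> = 1 - s" using s0 by (simp add: field_simps)
    finally show ?thesis using s0 by simp
  qed
  have ta: "real t * a \<le> (E/2 + eps/2) / gam + a"
  proof -
    have "real t * a \<le> (L / gam + 1) * a" using tle a0 by (intro mult_right_mono) auto
    also have "\<dots> = L * a / gam + a" using g0 by (simp add: field_simps)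
    also have "L * a \<le> (ln (1/(eps*s)) / 2) * (eps * s)"
      using Lle aes L0 a0 es1 by (intro mult_mono) auto
    also have "(ln (1/(eps*s)) / 2) * (eps * s) = (eps * s * ln (1/eps) + eps * (s * ln (1/s))) / 2"
      using e0 s0 by (simp add: ln_mult ln_div ne algebra_simps)
    also have "\<dots> \<le> (E + eps) / 2"
    proof -
      have "0 \<le> eps * ln (1/eps)" using lnbig e0 by (intro mult_nonneg_nonneg) linarith+
      then have "eps * ln (1/eps) * s \<le> eps * ln (1/eps)" using s1 by (intro mult_left_le) auto
      then have "eps * s * ln (1/eps) \<le> E" unfolding E_def by (simp add: mult_ac)
      moreover have "eps * (s * ln (1/s)) \<le> eps" using slog e0 by (intro mult_left_le) auto
      ultimately show ?thesis by simp
    qed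
    finally show ?thesis using g0 by (simp add: divide_right_mono add_divide_distrib)
  qed
  have part2: "a*(1 + 1/(gam*s)) \<le> eps + eps / gam"
  proof -
    have x1: "a*(1 + 1/(gam*s)) = a + a / (gam * s)" by (simp add: field_simps)
    have x2: "a / (gam * s) \<le> eps / gam" using aes g0 s0 by (simp add: field_simps)
    show ?thesis using x1 x2 aeps by linarith
  qed
  have "real t*a + a*(1 + 1/(gam*s)) + lam^t*sqrt a*(1 + 2/(gam*s))
      \<le> ((E/2 + eps/2) / gam + a) + (eps + eps / gam) + 3 * eps / gam"
    using ta part2 part1 by linarith
  also have "\<dots> \<le> (E/2 + eps/2) / gam + eps / gam + (eps / gam + eps / gam) + 3 * eps / gam"
    using aeps eg by linarith
  also have "\<dots> = (E/2 + 13/2 * eps) / gam" by (simp add: add_divide_distrib)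
  also have "\<dots> \<le> (7 * E) / gam" using epsE g0 by (intro divide_right_mono) auto
  finally show ?thesis unfolding E_def lam_def by blast
qed

context hs
begin

lemma hit_nonneg: "y<n \<Longrightarrow> 0 \<le> hit_at n P S k y x"
proof (induction k arbitrary: y)
  case 0 then show ?case by simp
next
  case (Suc k y) then show ?case
    using P_nonneg by (auto intro!: sum_nonneg mult_nonneg_nonneg)
qed

lemma hit_partial: "y<n \<Longrightarrow> (\<Sum>k<K. hit_at n P S k y x) \<le> 1"
proof (induction K arbitrary: y)
  case 0 then show ?case by simp
next
  case (Suc K y)
  have "(\<Sum>k<Suc K. hit_at n P S k y x) = hit_at n P S 0 y x + (\<Sum>k<K. hit_at n P S (Suc k) y x)"
    by (rule sum.lessThan_Suc_shift)
  also have "\<dots> \<le> 1"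
  proof (cases "y \<in> S")
    case True then show ?thesis by simp
  next
    case False
    have "(\<Sum>k<K. hit_at n P S (Suc k) y x) = (\<Sum>k<K. \<Sum>z<n. P y z * hit_at n P S k z x)"
      using False by simp
    also have "\<dots> = (\<Sum>z<n. P y z * (\<Sum>k<K. hit_at n P S k z x))"
      by (subst sum.swap) (simp add: sum_distrib_left)
    also have "\<dots> \<le> (\<Sum>z<n. P y z * 1)"
      using Suc.IH P_nonneg Suc.prems by (intro sum_mono mult_left_mono) auto
    also have "\<dots> = 1" using P_row[OF Suc.prems] by simp
    finally show ?thesis using False by simp
  qed
  finally show ?case .
qed

lemma hit_summable: "y<n \<Longrightarrow> summable (\<lambda>k. hit_at n P S k y x)"
  by (rule summableI_nonneg_bounded[where x=1]) (auto intro: hit_nonneg hit_partial)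

lemma H_eq: "(\<lambda>y. \<Sum>x\<in>A. hit_at n P S k y x) = (T ^^ k) indA"
proof (induction k)
  case 0
  show ?case
  proof
    fix y
    show "(\<Sum>x\<in>A. hit_at n P S 0 y x) = (T ^^ 0) indA y"
    proof (cases "y \<in> A")
      case True
      then have "y \<in> S" using AS by auto
      then have "(\<Sum>x\<in>A. hit_at n P S 0 y x) = (\<Sum>x\<in>A. if x = y then 1 else 0)"
        by (intro sum.cong) auto
      also have "\<dots> = 1" using True finA by simp
      finally show ?thesis using True by (simp add: indA_def)
    next
      case False
      then have "(\<Sum>x\<in>A. hit_at n P S 0 y x) = 0" by (intro sum.neutral) auto
      then show ?thesis using False by (simp add: indA_def)
    qed
  qed
next
  case (Suc k)
  show ?case
  proof
    fix y
    have "(\<Sum>x\<in>A. hit_at n P S (Suc k) y x) =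
          (if y \<in> S then 0 else (\<Sum>z<n. P y z * (\<Sum>x\<in>A. hit_at n P S k z x)))"
      by (simp add: sum_distrib_left) (subst sum.swap, simp)
    also have "\<dots> = (if y \<in> S then 0 else (\<Sum>z<n. P y z * (T ^^ k) indA z))"
      using fun_cong[OF Suc.IH] by simp
    also have "\<dots> = T ((T ^^ k) indA) y" by (simp add: T_def Dm_def Pf_def)
    finally show "(\<Sum>x\<in>A. hit_at n P S (Suc k) y x) = (T ^^ Suc k) indA y" by simp
  qed
qed

lemma trm_eq: "trm k = (\<Sum>x\<in>A. \<Sum>y<n. pi y * hit_at n P S k y x)"
proof -
  have "trm k = (\<Sum>y<n. pi y * (\<Sum>x\<in>A. hit_at n P S k y x))"
    unfolding trm_def ip_def one_def using fun_cong[OF H_eq[of k]] by simp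
  also have "\<dots> = (\<Sum>x\<in>A. \<Sum>y<n. pi y * hit_at n P S k y x)"
    by (simp add: sum_distrib_left) (rule sum.swap)
  finally show ?thesis .
qed

lemma harm_trm: "(\<Sum>x\<in>A. harm n P pi S x) = suminf trm" "summable trm"
proof -
  have s1: "summable (\<lambda>k. pi y * hit_at n P S k y x)" if "y<n" for y x
    using hit_summable[OF that] by (rule summable_mult)
  have s2: "summable (\<lambda>k. \<Sum>y<n. pi y * hit_at n P S k y x)" for x
    using s1 by (intro summable_sum) auto
  have "(\<Sum>x\<in>A. harm n P pi S x) = (\<Sum>x\<in>A. \<Sum>y<n. \<Sum>k. pi y * hit_at n P S k y x)"
    unfolding harm_def harm_from_def
  proof (intro sum.cong refl)
    fix x y assume "y \<in> {..<n}"
    then have y: "y < n" by simp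
    show "pi y * (\<Sum>k. hit_at n P S k y x) = (\<Sum>k. pi y * hit_at n P S k y x)"
      using suminf_mult[OF hit_summable[OF y, of x], of "pi y"] by simp
  qed
  also have "\<dots> = (\<Sum>x\<in>A. \<Sum>k. \<Sum>y<n. pi y * hit_at n P S k y x)"
    using s1 by (intro sum.cong refl suminf_sum[symmetric]) auto
  also have "\<dots> = (\<Sum>k. \<Sum>x\<in>A. \<Sum>y<n. pi y * hit_at n P S k y x)"
    using s2 by (intro suminf_sum[symmetric]) auto
  also have "\<dots> = suminf trm" unfolding trm_eq ..
  finally show "(\<Sum>x\<in>A. harm n P pi S x) = suminf trm" .
  show "summable trm" unfolding trm_eq by (rule summable_sum) (rule s2)
qed

lemma main_bound:
  assumes e0: "0 < eps" and e1: "eps < exp (-1)" and ae: "a \<le> eps * s"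
  shows "(\<Sum>x\<in>A. harm n P pi S x) \<le> 7 * (eps * ln (1/eps)) / (1 - slem n P)"
proof (cases "A = {}")
  case True
  have "0 \<le> 7 * (eps * ln (1/eps)) / (1 - slem n P)"
  proof -
    have "exp (-1::real) < 1" by simp
    then have "eps < 1" using e1 by linarith
    then have "1 < 1/eps" using e0 by (simp add: field_simps)
    then have "0 \<le> ln (1/eps)" by simp
    then show ?thesis using e0 slem_lt1 by simp
  qed
  then show ?thesis using True by simp
next
  case False
  then obtain x0 where x0: "x0 \<in> A" by auto
  have x0n: "x0 < n" using x0 AS Sn by auto
  have a0: "0 < a"
  proof -
    have "pi x0 \<le> a" unfolding a_def using x0 finA pi_nonneg AS Sn
      by (intro member_le_sum) auto
    then show ?thesis using pi_pos[OF x0n] by simp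
  qed
  have sa: "a \<le> s" unfolding a_def s_def using AS finS pi_nonneg Sn by (intro sum_mono2) auto
  have s0: "0 < s" using a0 sa by simp
  obtain t :: nat where t: "t*a + a*(1 + 1/(gam*s)) + (1-gam)^t*sqrt a*(1 + 2/(gam*s))
      \<le> 7 * (eps * ln (1/eps)) / gam"
    using final_arith[OF e0 e1 a0 ae s0 s_le1 gam_pos gam_le1] by blast
  have "suminf trm \<le> t*a + a*(1 + 1/(gam*s)) + lam^t*sqrt a*(1 + 2/(gam*s))"
    using harm_trm(2) trm_sum_bound[OF s0] by (rule suminf_le_const)
  also have "\<dots> \<le> 7 * (eps * ln (1/eps)) / gam" using t unfolding gam_def by simp
  finally show ?thesis using harm_trm(1) unfolding gam_def lam_def by simp
qed

end

theorem mainTheorem7: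
  "\<exists>C>0. \<exists>\<epsilon>0>0. \<forall>\<epsilon>::real. 0 < \<epsilon> \<and> \<epsilon> < \<epsilon>0 \<longrightarrow>
     (\<forall>(n::nat) (P::nat \<Rightarrow> nat \<Rightarrow> real) (\<pi>::nat \<Rightarrow> real) (A::nat set) (S::nat set).
        stochastic n P \<and> irreducible_chain n P \<and> aperiodic_chain n P \<and>
        reversible_wrt n P \<pi> \<and> A \<subseteq> S \<and> S \<subseteq> {..<n} \<and>
        (\<Sum>x\<in>A. \<pi> x) \<le> \<epsilon> * (\<Sum>x\<in>S. \<pi> x)
        \<longrightarrow> (\<Sum>x\<in>A. harm n P \<pi> S x) \<le> C * (\<epsilon> * ln (1 / \<epsilon>)) / (1 - slem n P))"
proof -
  have aux: "(\<Sum>x\<in>A. harm n P pi S x) \<le> 7 * (eps * ln (1 / eps)) / (1 - slem n P)"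
    if e: "0 < eps \<and> eps < exp (-1)" and h: "stochastic n P \<and> irreducible_chain n P \<and> aperiodic_chain n P \<and>
        reversible_wrt n P pi \<and> A \<subseteq> S \<and> S \<subseteq> {..<n} \<and>
        (\<Sum>x\<in>A. pi x) \<le> eps * (\<Sum>x\<in>S. pi x)"
    for eps :: real and n P pi and A S :: "nat set"
  proof -
    interpret hs n P pi S A
      using h by unfold_locales auto
    show ?thesis
      using main_bound[of eps] e h unfolding a_def s_def by auto
  qed
  show ?thesis
    apply (rule exI[of _ "7::real"])
    apply (rule conjI)
     apply simp
    apply (rule exI[of _ "exp (-1)"])
    apply (rule conjI)
     apply simp
    using aux by blast
qed

end
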